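(* The algorithm $\mathcal{U}$ described in the context is linearizable with respect to $\mathcal{T}$: every history $H$ of $\mathcal{U}$ has a completion $H'$ and a linearization of $H'$ that conforms to $\mathcal{T}$.
   Context: Model: an asynchronous shared-memory system with possibly infinitely many processes, any of which may crash, communicating via atomic shared objects. A fetch-and-increment (F\&I) object stores an integer; F\&I$(C)$ atomically returns the current value and increments it. A generalized-compare-and-swap (GCAS) object $O$ stores a value and supports Read$(O)$ and GCAS$(c, O, v_1, v_2)$, which atomically does: if $c(\text{current value of } O, v_1)$ holds then set $O := v_2$ and return true, else return false. Tuples are compared componentwise for $=$; GCAS$(>, A, (t,-,-), v)$ succeeds iff the time field of $A$ is strictly greater than $t$. Implemented type $\mathcal{T} = (OP, RES, Q, \delta)$ with $\delta \subseteq Q\times OP\times Q\times RES$ and initial state $s_0$; a procedure $apply_{\mathcal{T}}(o,s)$ returns some $(s',r)$ with $(s,o,s',r)\in\delta$. $NULL$ is a value different from every response of $\mathcal{T}$, and $NOOP$ is a name different from every operation of $\mathcal{T}$. Algorithm $\mathcal{U}$: each process $p$ owns a GCAS object $H_p$ with fields $(time, response)$. Shared objects: F\&I object $C$, initially $1$; GCAS object $A$ with fields $(time, op, ptr)$, initially $(0, NOOP, h(NOOP))$, where $h(NOOP)$ is a pointer to an immutable location containing $(0,\perp)$; GCAS object $S$ with fields $(time, state, response, ptr)$, initially $(0, s_0, \perp, h(NOOP))$. Process $p$ performs operation $o$ by calling DoOp$(o)$: (1) DoOp$(o)$ invoked; (2) $t := $ F\&I$(C)$; (3) $H_p := (t,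 NULL)$; (4) while $H_p = (t, NULL)$ do: (5) $(t^*, s^*, r^*, roptr^* ) := S$; (6) GCAS$(=, *roptr^*, (t^*, NULL), (t^*, r^* ))$; (7) GCAS$(>, A, (t,-,-), (t, o, \&H_p))$; (8) $(t', o', roptr') := A$; (9) $(\hat t, \hat r) := *roptr'$; (10) if $(\hat t,\hat r) = (t', NULL)$ then (11) $(s', r') := apply_{\mathcal{T}}(o', s^* )$; (12) GCAS$(=, S, (t^*,s^*,r^*,roptr^* ), (t', s', r', roptr'))$; (13) else GCAS$(=, A, (t', o', roptr'), (t, o, \&H_p))$; end while; (14) return $H_p.response$. Lines 1 and 14 are the invocation and response steps. Linearizability: a history is the subsequence of invocation/response steps of an execution; an operation execution is complete if its response appears, pending otherwise. A completion $H'$ of $H$ removes some pending invocations and adds responses to all others so every operation is complete. A linearization of a complete history assigns each operation a distinct point within its invocation–response interval; it conforms to $\mathcal{T}$ if the responses are those obtained by applying the operations sequentially in that order starting from $s_0$ according to $\delta$. *)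

theory Defs
  imports Complex_Main
begin

text \<open>Values stored in response fields: NULL, the initial bottom value, or a genuine
  response of the implemented type.\<close>
datatype 'r rval = Null | Bot | Resp 'r

datatype 'o aop = NOOP | Op 'o

text \<open>Pointers stored in A and S: h(NOOP) (immutable location containing (0,Bot)),
  or the address of H_p of process p.\<close>
datatype 'p ptr = HNoop | HP 'p

text \<open>Local state of a process: program counter (0 = not executing DoOp, otherwise the
  line number about to be executed) and the local variables of DoOp.\<close>
record ('p,'o,'r,'s) loc =
  l_pc :: nat
  l_op :: 'o
  l_t :: nat
  l_ts :: nat
  l_ss :: 's
  l_rs :: "'r rval"
  l_ps :: "'p ptr"
  l_t1 :: nat
  l_o1 :: "'o aop"
  l_p1 :: "'p ptr"
  l_s1 :: 's
  l_r1 :: "'r rval"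

record ('p,'o,'r,'s) conf =
  cC :: nat
  cA :: "nat \<times> 'o aop \<times> 'p ptr"
  cS :: "nat \<times> 's \<times> 'r rval \<times> 'p ptr"
  cH :: "'p \<Rightarrow> nat \<times> 'r rval"
  cL :: "'p \<Rightarrow> ('p,'o,'r,'s) loc"

datatype ('p,'o,'r) event = Inv 'p 'o | Res 'p "'r rval"

fun ev_proc :: "('p,'o,'r) event \<Rightarrow> 'p" where
  "ev_proc (Inv p _) = p" | "ev_proc (Res p _) = p"

fun is_inv :: "('p,'o,'r) event \<Rightarrow> bool" where
  "is_inv (Inv _ _) = True" | "is_inv (Res _ _) = False"

definition updL :: "('p,'o,'r,'s) conf \<Rightarrow> 'p \<Rightarrow> (('p,'o,'r,'s) loc \<Rightarrow> ('p,'o,'r,'s) loc)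
    \<Rightarrow> ('p,'o,'r,'s) conf" where
  "updL c p f = c\<lparr>cL := (cL c)(p := f (cL c p))\<rparr>"

definition deref :: "('p,'o,'r,'s) conf \<Rightarrow> 'p ptr \<Rightarrow> nat \<times> 'r rval" where
  "deref c x = (case x of HNoop \<Rightarrow> (0, Bot) | HP q \<Rightarrow> cH c q)"

text \<open>GCAS(=, *x, old, new) on the location pointed to by x (h(NOOP) is immutable).\<close>
definition gcas_ptr :: "('p,'o,'r,'s) conf \<Rightarrow> 'p ptr \<Rightarrow> nat \<times> 'r rval \<Rightarrow> nat \<times> 'r rval
    \<Rightarrow> 'p \<Rightarrow> nat \<times> 'r rval" where
  "gcas_ptr c x old new = (case x of HNoop \<Rightarrow> cH c
      | HP q \<Rightarrow> (if cH c q = old then (cH c)(q := new) else cH c))"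

text \<open>ustep delta c p e c': process p takes one atomic step from c to c', producing the
  history event e (None for internal steps). apply_T may return any (s',r) allowed by delta.\<close>
inductive ustep :: "('s \<times> 'o \<times> 's \<times> 'r) set \<Rightarrow> ('p,'o,'r,'s) conf \<Rightarrow> 'p
    \<Rightarrow> ('p,'o,'r) event option \<Rightarrow> ('p,'o,'r,'s) conf \<Rightarrow> bool"
  for \<delta> where
  line1: "l_pc (cL c p) = 0 \<Longrightarrow>
     ustep \<delta> c p (Some (Inv p oo)) (updL c p (\<lambda>l. l\<lparr>l_pc := 2, l_op := oo\<rparr>))"
| line2: "l_pc (cL c p) = 2 \<Longrightarrow>
     ustep \<delta> c p None (updL (c\<lparr>cC := cC c + 1\<rparr>) p (\<lambda>l. l\<lparr>l_pc := 3, l_t := cC c\<rparr>))"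
| line3: "l_pc (cL c p) = 3 \<Longrightarrow>
     ustep \<delta> c p None
       (updL (c\<lparr>cH := (cH c)(p := (l_t (cL c p), Null))\<rparr>) p (\<lambda>l. l\<lparr>l_pc := 4\<rparr>))"
| line4: "l_pc (cL c p) = 4 \<Longrightarrow>
     ustep \<delta> c p None
       (updL c p (\<lambda>l. l\<lparr>l_pc := (if cH c p = (l_t l, Null) then 5 else 14)\<rparr>))"
| line5: "l_pc (cL c p) = 5 \<Longrightarrow> cS c = (t, s, r, x) \<Longrightarrow>
     ustep \<delta> c p None
       (updL c p (\<lambda>l. l\<lparr>l_pc := 6, l_ts := t, l_ss := s, l_rs := r, l_ps := x\<rparr>))"
| line6: "l_pc (cL c p) = 6 \<Longrightarrow> l = cL c p \<Longrightarrow>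
     ustep \<delta> c p None
       (updL (c\<lparr>cH := gcas_ptr c (l_ps l) (l_ts l, Null) (l_ts l, l_rs l)\<rparr>) p
          (\<lambda>l. l\<lparr>l_pc := 7\<rparr>))"
| line7: "l_pc (cL c p) = 7 \<Longrightarrow> l = cL c p \<Longrightarrow>
     ustep \<delta> c p None
       (updL (c\<lparr>cA := (if fst (cA c) > l_t l then (l_t l, Op (l_op l), HP p) else cA c)\<rparr>) p
          (\<lambda>l. l\<lparr>l_pc := 8\<rparr>))"
| line8: "l_pc (cL c p) = 8 \<Longrightarrow> cA c = (t, oo, x) \<Longrightarrow>
     ustep \<delta> c p None (updL c p (\<lambda>l. l\<lparr>l_pc := 9, l_t1 := t, l_o1 := oo, l_p1 := x\<rparr>))"
| line9_10: "l_pc (cL c p) = 9 \<Longrightarrow>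
     ustep \<delta> c p None
       (updL c p (\<lambda>l. l\<lparr>l_pc := (if deref c (l_p1 l) = (l_t1 l, Null) then 11 else 13)\<rparr>))"
| line11: "l_pc (cL c p) = 11 \<Longrightarrow> l_o1 (cL c p) = Op oo \<Longrightarrow>
     (l_ss (cL c p), oo, s', r') \<in> \<delta> \<Longrightarrow>
     ustep \<delta> c p None (updL c p (\<lambda>l. l\<lparr>l_pc := 12, l_s1 := s', l_r1 := Resp r'\<rparr>))"
| line12: "l_pc (cL c p) = 12 \<Longrightarrow> l = cL c p \<Longrightarrow>
     ustep \<delta> c p None
       (updL (c\<lparr>cS := (if cS c = (l_ts l, l_ss l, l_rs l, l_ps l)
                         then (l_t1 l, l_s1 l, l_r1 l, l_p1 l) else cS c)\<rparr>) p
          (\<lambda>l. l\<lparr>l_pc := 4\<rparr>))"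
| line13: "l_pc (cL c p) = 13 \<Longrightarrow> l = cL c p \<Longrightarrow>
     ustep \<delta> c p None
       (updL (c\<lparr>cA := (if cA c = (l_t1 l, l_o1 l, l_p1 l)
                         then (l_t l, Op (l_op l), HP p) else cA c)\<rparr>) p
          (\<lambda>l. l\<lparr>l_pc := 4\<rparr>))"
| line14: "l_pc (cL c p) = 14 \<Longrightarrow>
     ustep \<delta> c p (Some (Res p (snd (cH c p)))) (updL c p (\<lambda>l. l\<lparr>l_pc := 0\<rparr>))"

text \<open>Initial configurations (the initial contents of the H_p are unspecified).\<close>
definition init_conf :: "'s \<Rightarrow> ('p,'o,'r,'s) conf \<Rightarrow> bool" where
  "init_conf s0 c \<longleftrightarrow> cC c = 1 \<and> cA c = (0, NOOP, HNoop) \<and> cS c = (0, s0, Bot, HNoop)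
     \<and> (\<forall>p. l_pc (cL c p) = 0)"

text \<open>Crashed processes
  simply take no further steps; the scheduling is arbitrary.\<close>
inductive uexec :: "('s \<times> 'o \<times> 's \<times> 'r) set \<Rightarrow> ('p,'o,'r,'s) conf
    \<Rightarrow> ('p,'o,'r) event option list \<Rightarrow> ('p,'o,'r,'s) conf \<Rightarrow> bool"
  for \<delta> where
  nil: "uexec \<delta> c [] c"
| snoc: "uexec \<delta> c0 tr c \<Longrightarrow> ustep \<delta> c p e c' \<Longrightarrow> uexec \<delta> c0 (tr @ [e]) c'"

definition history :: "('p,'o,'r) event option list \<Rightarrow> ('p,'o,'r) event list" where
  "history tr = List.map_filter (\<lambda>x. x) tr"

definition proj :: "'p \<Rightarrow> ('p,'o,'r) event list \<Rightarrow> ('p,'o,'r) event list" where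
  "proj p h = filter (\<lambda>e. ev_proc e = p) h"

definition wf_hist :: "('p,'o,'r) event list \<Rightarrow> bool" where
  "wf_hist h \<longleftrightarrow> (\<forall>p. \<forall>i < length (proj p h). is_inv (proj p h ! i) \<longleftrightarrow> even i)"

definition complete_hist :: "('p,'o,'r) event list \<Rightarrow> bool" where
  "complete_hist h \<longleftrightarrow> wf_hist h \<and> (\<forall>p. even (length (proj p h)))"

definition pending :: "('p,'o,'r) event list \<Rightarrow> nat \<Rightarrow> bool" where
  "pending h i \<longleftrightarrow> i < length h \<and> is_inv (h ! i)
     \<and> (\<forall>j. i < j \<and> j < length h \<longrightarrow> ev_proc (h ! j) \<noteq> ev_proc (h ! i))"

definition is_completion :: "('p,'o,'r) event list \<Rightarrow> ('p,'o,'r) event list \<Rightarrow> bool" where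
  "is_completion h h' \<longleftrightarrow> (\<exists>D ext.
      (\<forall>i\<in>D. pending h i) \<and> (\<forall>e\<in>set ext. \<not> is_inv e)
      \<and> h' = map (\<lambda>i. h ! i) (filter (\<lambda>i. i \<notin> D) [0..<length h]) @ ext
      \<and> complete_hist h')"

definition matching :: "('p,'o,'r) event list \<Rightarrow> nat \<Rightarrow> nat \<Rightarrow> bool" where
  "matching h i j \<longleftrightarrow> i < j \<and> j < length h \<and> is_inv (h ! i) \<and> \<not> is_inv (h ! j)
     \<and> ev_proc (h ! j) = ev_proc (h ! i)
     \<and> (\<forall>k. i < k \<and> k < j \<longrightarrow> ev_proc (h ! k) \<noteq> ev_proc (h ! i))"

text \<open>Operations of a complete history are identified by their invocation positions.\<close>
definition ops :: "('p,'o,'r) event list \<Rightarrow> nat set" where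
  "ops h = {i. i < length h \<and> is_inv (h ! i)}"

definition inv_op :: "('p,'o,'r) event \<Rightarrow> 'o" where
  "inv_op e = (case e of Inv _ oo \<Rightarrow> oo)"

definition res_val :: "('p,'o,'r) event \<Rightarrow> 'r rval" where
  "res_val e = (case e of Res _ v \<Rightarrow> v)"

definition linearization :: "('p,'o,'r) event list \<Rightarrow> (nat \<Rightarrow> real) \<Rightarrow> bool" where
  "linearization h pt \<longleftrightarrow> inj_on pt (ops h)
     \<and> (\<forall>i\<in>ops h. \<forall>j. matching h i j \<longrightarrow> real i \<le> pt i \<and> pt i \<le> real j)"

definition conforms :: "('s \<times> 'o \<times> 's \<times> 'r) set \<Rightarrow> 's \<Rightarrow> ('p,'o,'r) event list
    \<Rightarrow> (nat \<Rightarrow> real) \<Rightarrow> bool" where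
  "conforms \<delta> s0 h pt \<longleftrightarrow> (\<exists>ord sts.
      distinct ord \<and> set ord = ops h \<and> sorted_wrt (\<lambda>a b. pt a < pt b) ord
      \<and> length sts = Suc (length ord) \<and> sts ! 0 = s0
      \<and> (\<forall>k < length ord. \<exists>j r. matching h (ord ! k) j \<and> res_val (h ! j) = Resp r
             \<and> (sts ! k, inv_op (h ! (ord ! k)), sts ! Suc k, r) \<in> \<delta>))"

end

theory Submission
  imports Defs
begin


lemma proj_append[simp]: "proj p (xs @ ys) = proj p xs @ proj p ys"
  by (simp add: proj_def)

lemma proj_Nil[simp]: "proj p [] = []" by (simp add: proj_def)

lemma proj_single: "proj p [e] = (if ev_proc e = p then [e] else [])"
  by (simp add: proj_def)

lemma wf_hist_snoc:
  "wf_hist (h @ [e]) \<longleftrightarrow> wf_hist h \<and> (is_inv e \<longleftrightarrow> even (length (proj (ev_proc e) h)))"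
proof
  assume A: "wf_hist (h @ [e])"
  have "wf_hist h"
    unfolding wf_hist_def
  proof (intro allI impI)
    fix p i assume i: "i < length (proj p h)"
    from A have "is_inv (proj p (h@[e]) ! i) \<longleftrightarrow> even i"
      unfolding wf_hist_def using i by (simp add: proj_single)
    thus "is_inv (proj p h ! i) \<longleftrightarrow> even i" using i by (simp add: proj_single nth_append)
  qed
  moreover have "is_inv e \<longleftrightarrow> even (length (proj (ev_proc e) h))"
    using A unfolding wf_hist_def
    by (erule_tac x="ev_proc e" in allE, erule_tac x="length (proj (ev_proc e) h)" in allE)
       (simp add: proj_single)
  ultimately show "wf_hist h \<and> (is_inv e \<longleftrightarrow> even (length (proj (ev_proc e) h)))" by blast
next
  assume B: "wf_hist h \<and> (is_inv e \<longleftrightarrow> even (length (proj (ev_proc e) h)))"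
  show "wf_hist (h @ [e])"
    unfolding wf_hist_def
  proof (intro allI impI)
    fix p i assume i: "i < length (proj p (h @ [e]))"
    show "is_inv (proj p (h @ [e]) ! i) \<longleftrightarrow> even i"
    proof (cases "i < length (proj p h)")
      case True
      then show ?thesis using B unfolding wf_hist_def by (simp add: nth_append)
    next
      case False
      then have "ev_proc e = p" "i = length (proj p h)" using i by (auto simp: proj_single split: if_splits)
      then show ?thesis using B by (simp add: proj_single)
    qed
  qed
qed

lemma wf_hist_iff:
  "wf_hist h \<longleftrightarrow> (\<forall>i<length h. is_inv (h!i) \<longleftrightarrow> even (length (proj (ev_proc (h!i)) (take i h))))"
proof (induction h rule: rev_induct)
  case Nil
  then show ?case by (simp add: wf_hist_def)
next
  case (snoc e h)
  show ?case unfolding wf_hist_snoc snoc.IH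
    by (auto simp: nth_append less_Suc_eq)
qed

lemma pending_snoc:
  "pending (h @ [e]) a \<longleftrightarrow> (a = length h \<and> is_inv e) \<or> (pending h a \<and> ev_proc e \<noteq> ev_proc (h!a))"
  unfolding pending_def
  by (auto simp: nth_append less_Suc_eq)

lemma matching_snoc:
  "matching (h @ [e]) a b \<longleftrightarrow> matching h a b \<or>
     (b = length h \<and> pending h a \<and> \<not> is_inv e \<and> ev_proc e = ev_proc (h!a))"
  unfolding matching_def pending_def
  by (auto simp: nth_append less_Suc_eq)

lemma matching_unique: "matching h a j \<Longrightarrow> matching h a j' \<Longrightarrow> j = j'"
  unfolding matching_def by (metis linorder_neqE_nat)

lemma pending_unique: "pending h a \<Longrightarrow> pending h b \<Longrightarrow> ev_proc (h!a) = ev_proc (h!b) \<Longrightarrow> a = b"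
  unfolding pending_def by (metis linorder_neqE_nat)



locale loglin =
  fixes h :: "('p,'o,'r) event list" and as ns :: "nat list" and rs :: "'r list"
    and sts :: "'s list" and \<delta> :: "('s \<times> 'o \<times> 's \<times> 'r) set" and s0 :: 's
  assumes wf: "wf_hist h"
    and pend_even: "\<forall>p. (\<exists>a. pending h a \<and> ev_proc (h!a) = p) \<or> even (length (proj p h))"
    and M: "\<forall>a<length h. is_inv (h!a) \<longrightarrow> pending h a \<or> (\<exists>b. matching h a b)"
    and len_ns: "length ns = length as" and len_rs: "length rs = length as"
    and len_sts: "length sts = Suc (length as)"
    and dist: "distinct as"
    and ent: "\<forall>i<length as. as!i < ns!i \<and> ns!i \<le> length h \<and> is_inv (h!(as!i))"
    and mono: "\<forall>i j. i \<le> j \<longrightarrow> j < length as \<longrightarrow> ns!i \<le> ns!j"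
    and st0: "sts!0 = s0"
    and chain: "\<forall>i<length as. (sts!i, inv_op (h!(as!i)), sts!Suc i, rs!i) \<in> \<delta>"
    and LR: "\<forall>a b. matching h a b \<longrightarrow> (\<exists>i<length as. as!i = a \<and> ns!i \<le> b \<and> res_val (h!b) = Resp (rs!i))"
begin

definition "D = {a. pending h a \<and> a \<notin> set as}"
definition "ks = filter (\<lambda>i. i \<notin> D) [0..<length h]"
definition "cnt n = length (filter (\<lambda>i. i \<notin> D) [0..<n])"
definition "hk = map (nth h) ks"
definition "PL = filter (\<lambda>i. pending h (as!i)) [0..<length as]"
definition xt :: "('p,'o,'r) event list" where "xt = map (\<lambda>i. Res (ev_proc (h!(as!i))) (Resp (rs!i))) PL"
definition "h' = hk @ xt"
definition "g k = real (cnt (ns!k)) - 1 + real (Suc k) / real (Suc (length as))"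
definition "ord = map (\<lambda>i. cnt (as!i)) [0..<length as]"
definition "pt x = (if x \<in> set ord then g (THE i. i < length as \<and> cnt (as!i) = x) else 0)"

lemma D_pending: "a \<in> D \<Longrightarrow> pending h a" by (simp add: D_def)

lemma cnt_split: "m \<le> n \<Longrightarrow> filter (\<lambda>i. i \<notin> D) [0..<n] = filter (\<lambda>i. i \<notin> D) [0..<m] @ filter (\<lambda>i. i \<notin> D) [m..<n]"
  by (metis filter_append le_Suc_ex upt_add_eq_append zero_le)

lemma cnt_mono: "m \<le> n \<Longrightarrow> cnt m \<le> cnt n"
  unfolding cnt_def using cnt_split by simp

lemma cnt_Suc: "cnt (Suc n) = cnt n + (if n \<notin> D then 1 else 0)"
  unfolding cnt_def by simp

lemma cnt_lt: "c \<notin> D \<Longrightarrow> c < n \<Longrightarrow> cnt c < cnt n"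
  using cnt_Suc[of c] cnt_mono[of "Suc c" n] by simp

lemma len_ks: "length ks = cnt (length h)" by (simp add: ks_def cnt_def)

lemma ks_cnt: assumes "c < length h" "c \<notin> D" shows "ks ! cnt c = c" "cnt c < length ks"
proof -
  have "[0..<length h] = [0..<c] @ [c..<length h]"
    using upt_add_eq_append[of 0 c "length h - c"] assms(1) by simp
  also have "[c..<length h] = c # [Suc c..<length h]" using upt_conv_Cons assms(1) by simp
  finally have "[0..<length h] = [0..<c] @ c # [Suc c..<length h]" .
  hence "ks = filter (\<lambda>i. i \<notin> D) [0..<c] @ c # filter (\<lambda>i. i \<notin> D) [Suc c..<length h]"
    using assms(2) by (simp add: ks_def)
  thus "ks ! cnt c = c" "cnt c < length ks" by (simp_all add: cnt_def nth_append)
qed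

lemma ks_dist: "distinct ks" by (simp add: ks_def)

lemma ks_elem: assumes "x < length ks"
  shows "ks!x < length h" "ks!x \<notin> D" "cnt (ks!x) = x"
proof -
  have "ks!x \<in> set ks" using assms by simp
  thus a: "ks!x < length h" "ks!x \<notin> D" by (auto simp: ks_def)
  have "ks ! cnt (ks!x) = ks!x" "cnt (ks!x) < length ks" using ks_cnt a by auto
  thus "cnt (ks!x) = x" using ks_dist assms by (simp add: nth_eq_iff_index_eq)
qed

lemma cnt_inj: "a < length h \<Longrightarrow> a \<notin> D \<Longrightarrow> b < length h \<Longrightarrow> b \<notin> D \<Longrightarrow> cnt a = cnt b \<Longrightarrow> a = b"
  by (metis ks_cnt(1))

lemma take_ks: "c \<le> length h \<Longrightarrow> take (cnt c) ks = filter (\<lambda>i. i \<notin> D) [0..<c]"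
  unfolding ks_def cnt_def using cnt_split[of c "length h"] by simp

lemma len_hk: "length hk = length ks" by (simp add: hk_def)

lemma h'_nth_hk: "x < length ks \<Longrightarrow> h' ! x = h ! (ks ! x)"
  by (simp add: h'_def hk_def nth_append)

lemma h'_nth_ext: "x < length xt \<Longrightarrow> h' ! (length ks + x) = xt ! x"
  by (simp add: h'_def hk_def nth_append)

lemma len_h': "length h' = length ks + length PL" by (simp add: h'_def hk_def xt_def)

lemma as_lt: "i < length as \<Longrightarrow> as!i < length h"
  using ent by (meson less_le_trans)

lemma as_notD: "i < length as \<Longrightarrow> as!i \<notin> D" by (simp add: D_def)

lemma PL_elem: "e < length PL \<Longrightarrow> PL!e < length as \<and> pending h (as!(PL!e))"
proof -
  assume "e < length PL" hence "PL!e \<in> set PL" by simp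
  thus ?thesis by (simp add: PL_def)
qed

lemma PL_dist: "distinct PL" by (simp add: PL_def)

lemma ext_nth: "e < length PL \<Longrightarrow> xt ! e = Res (ev_proc (h!(as!(PL!e)))) (Resp (rs!(PL!e)))"
  by (simp add: xt_def)

lemma len_ext: "length xt = length PL" by (simp add: xt_def)

lemma ext_proc_inj: assumes "e < length PL" "e' < length PL"
  "ev_proc (h!(as!(PL!e))) = ev_proc (h!(as!(PL!e')))" shows "e = e'"
proof -
  have "as!(PL!e) = as!(PL!e')" using pending_unique PL_elem assms by blast
  hence "PL!e = PL!e'" using dist PL_elem assms nth_eq_iff_index_eq by blast
  thus ?thesis using PL_dist assms nth_eq_iff_index_eq by blast
qed

lemma pending_notin_between: "pending h a \<Longrightarrow> a < c \<Longrightarrow> c < length h \<Longrightarrow> ev_proc (h!c) \<noteq> ev_proc (h!a)"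
  unfolding pending_def by auto

lemma match_hk: assumes "matching h a b" shows "matching h' (cnt a) (cnt b)"
proof -
  have ab: "a < b" "b < length h" "is_inv (h!a)" "\<not> is_inv (h!b)" "ev_proc (h!b) = ev_proc (h!a)"
    and btw: "\<And>k. a < k \<Longrightarrow> k < b \<Longrightarrow> ev_proc (h!k) \<noteq> ev_proc (h!a)"
    using assms unfolding matching_def by auto
  have anp: "\<not> pending h a" using ab unfolding pending_def by auto
  have aD: "a \<notin> D" using anp D_pending by blast
  have bnp: "\<not> pending h b" using ab unfolding pending_def by auto
  have bD: "b \<notin> D" using bnp D_pending by blast
  have al: "a < length h" using ab by simp
  have c1: "cnt a < cnt b" using cnt_lt aD ab by simp
  have c2: "cnt b < length ks" using ks_cnt bD ab by simp
  have e1: "h' ! cnt a = h ! a" using h'_nth_hk ks_cnt aD al c1 c2 by simp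
  have e2: "h' ! cnt b = h ! b" using h'_nth_hk ks_cnt bD ab c2 by simp
  have "ev_proc (h' ! k) \<noteq> ev_proc (h' ! cnt a)" if k: "cnt a < k" "k < cnt b" for k
  proof -
    have kl: "k < length ks" using k c2 by simp
    let ?c = "ks!k"
    have cc: "cnt ?c = k" "?c < length h" "?c \<notin> D" using ks_elem kl by auto
    have "a < ?c" using cnt_mono[of ?c a] k cc by linarith
    moreover have "?c < b" using cnt_mono[of b ?c] k cc by linarith
    ultimately show ?thesis using btw e1 h'_nth_hk kl by simp
  qed
  moreover have "cnt b < length h'" using c2 by (simp add: h'_def hk_def)
  ultimately show ?thesis unfolding matching_def using c1 e1 e2 ab by auto
qed

lemma match_ext: assumes e: "e < length PL"
  shows "matching h' (cnt (as!(PL!e))) (length ks + e)"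
proof -
  let ?k = "PL!e" let ?a = "as!?k"
  have kl: "?k < length as" and pa: "pending h ?a" using PL_elem e by auto
  have al: "?a < length h" using as_lt kl .
  have aD: "?a \<notin> D" using as_notD kl .
  have c1: "cnt ?a < length ks" and e1: "h' ! cnt ?a = h ! ?a"
    using ks_cnt aD al h'_nth_hk by auto
  have e2: "h' ! (length ks + e) = Res (ev_proc (h!?a)) (Resp (rs!?k))"
    using h'_nth_ext[of e] ext_nth[OF e] e len_ext by metis
  have "ev_proc (h' ! j) \<noteq> ev_proc (h' ! cnt ?a)" if j: "cnt ?a < j" "j < length ks + e" for j
  proof (cases "j < length ks")
    case True
    let ?c = "ks!j"
    have cc: "cnt ?c = j" "?c < length h" using ks_elem True by auto
    have "?a < ?c" using cnt_mono[of ?c ?a] j cc by linarith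
    then show ?thesis using pending_notin_between[OF pa] cc e1 h'_nth_hk True by simp
  next
    case False
    define e' where "e' = j - length ks"
    have e'l: "e' < e" "j = length ks + e'" using j False by (auto simp: e'_def)
    have e'pl: "e' < length PL" using e'l(1) e by linarith
    hence "e' < length xt" unfolding len_ext .
    hence "h' ! j = xt ! e'" using h'_nth_ext[of e'] e'l by simp
    hence "ev_proc (h'!j) = ev_proc (h!(as!(PL!e')))" using ext_nth[OF e'pl] by simp
    moreover have "ev_proc (h!(as!(PL!e'))) \<noteq> ev_proc (h!?a)"
      using ext_proc_inj[OF e'pl e] e'l(1) by auto
    ultimately show ?thesis using e1 by simp
  qed
  moreover have "length ks + e < length h'" using len_h' e by simp
  moreover have "is_inv (h!?a)" using pa unfolding pending_def by simp
  ultimately show ?thesis unfolding matching_def using c1 e1 e2 by auto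
qed


lemma as_cnt: "i < length as \<Longrightarrow> cnt (as!i) < length ks \<and> h' ! cnt (as!i) = h!(as!i)"
  using ks_cnt[OF as_lt as_notD] h'_nth_hk by metis

lemma match_h'b: "matching h a b \<Longrightarrow> h' ! cnt b = h ! b"
proof -
  assume m: "matching h a b"
  hence "\<not> pending h b" "b < length h" unfolding matching_def pending_def by auto
  hence "b \<notin> D" "b < length h" using D_pending by auto
  thus ?thesis using ks_cnt h'_nth_hk by metis
qed

lemma resp_exists: assumes i: "i < length as"
  shows "\<exists>j0. matching h' (cnt (as!i)) j0 \<and> res_val (h'!j0) = Resp (rs!i) \<and> cnt (ns!i) \<le> j0"
proof (cases "pending h (as!i)")
  case True
  hence "i \<in> set PL" using i by (simp add: PL_def)
  then obtain e where e: "e < length PL" "PL!e = i" by (metis in_set_conv_nth)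
  have "matching h' (cnt (as!i)) (length ks + e)" using match_ext[OF e(1)] e(2) by simp
  moreover have "h' ! (length ks + e) = xt ! e" using h'_nth_ext e(1) len_ext by simp
  hence "res_val (h' ! (length ks + e)) = Resp (rs!i)" using ext_nth[OF e(1)] e(2) by (simp add: res_val_def)
  moreover have "cnt (ns!i) \<le> length ks" using cnt_mono[of "ns!i" "length h"] ent i len_ks by simp
  ultimately show ?thesis by (intro exI[of _ "length ks + e"]) auto
next
  case False
  have "is_inv (h!(as!i))" "as!i < length h" using ent i as_lt by auto
  then obtain b where b: "matching h (as!i) b" using M False by blast
  then obtain i' where i': "i' < length as" "as!i' = as!i" "ns!i' \<le> b" "res_val (h!b) = Resp (rs!i')"
    using LR by blast
  have "i' = i" using dist i i' nth_eq_iff_index_eq by blast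
  moreover have "matching h' (cnt (as!i)) (cnt b)" using match_hk[OF b] .
  moreover have "h' ! cnt b = h ! b" using match_h'b[OF b] .
  ultimately show ?thesis using i' cnt_mono[of "ns!i" b] by (intro exI[of _ "cnt b"]) auto
qed

lemma ord_nth: "k < length ord \<Longrightarrow> ord ! k = cnt (as!k)" by (simp add: ord_def)
lemma len_ord: "length ord = length as" by (simp add: ord_def)

lemma cnt_as_inj: "i < length as \<Longrightarrow> j < length as \<Longrightarrow> cnt (as!i) = cnt (as!j) \<Longrightarrow> i = j"
  using cnt_inj as_lt as_notD dist nth_eq_iff_index_eq by metis

lemma ord_dist: "distinct ord"
  unfolding ord_def distinct_map by (auto intro!: inj_onI cnt_as_inj)

lemma pt_ord: "i < length as \<Longrightarrow> pt (cnt (as!i)) = g i"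
proof -
  assume i: "i < length as"
  have "cnt (as!i) \<in> set ord" using i by (auto simp: ord_def)
  moreover have "(THE j. j < length as \<and> cnt (as!j) = cnt (as!i)) = i"
    using i cnt_as_inj by (intro the_equality) auto
  ultimately show ?thesis by (simp add: pt_def)
qed

lemma g_mono: "i < j \<Longrightarrow> j < length as \<Longrightarrow> g i < g j"
proof -
  assume ij: "i < j" "j < length as"
  have "cnt (ns!i) \<le> cnt (ns!j)" using mono ij cnt_mono by simp
  moreover have "real (Suc i) / real (Suc (length as)) < real (Suc j) / real (Suc (length as))"
    using ij by (simp add: divide_strict_right_mono)
  ultimately show ?thesis unfolding g_def by simp
qed

lemma g_low: "i < length as \<Longrightarrow> real (cnt (as!i)) \<le> g i"
proof -
  assume i: "i < length as"
  have "cnt (as!i) < cnt (ns!i)" using cnt_lt[OF as_notD[OF i]] ent i by simp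
  moreover have "0 \<le> real (Suc i) / real (Suc (length as))" by simp
  ultimately show ?thesis unfolding g_def by linarith
qed

lemma g_high: "i < length as \<Longrightarrow> g i < real (cnt (ns!i))"
proof -
  assume i: "i < length as"
  have "real (Suc i) / real (Suc (length as)) < 1" using i by simp
  thus ?thesis unfolding g_def by linarith
qed

lemma ops_h': "ops h' = set ord"
proof
  show "ops h' \<subseteq> set ord"
  proof
    fix x assume "x \<in> ops h'"
    hence x: "x < length h'" "is_inv (h'!x)" by (auto simp: ops_def)
    have xl: "x < length ks"
    proof (rule ccontr)
      assume "\<not> x < length ks"
      then obtain e where e: "x = length ks + e" "e < length PL" using x len_h' by (metis add_less_cancel_left le_Suc_ex not_less)
      hence "h'!x = xt!e" using h'_nth_ext len_ext by simp
      thus False using x ext_nth e by simp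
    qed
    let ?c = "ks!x"
    have c: "?c < length h" "?c \<notin> D" "cnt ?c = x" using ks_elem xl by auto
    have ci: "is_inv (h!?c)" using x h'_nth_hk xl by simp
    have "?c \<in> set as"
    proof (cases "pending h ?c")
      case True thus ?thesis using c by (simp add: D_def)
    next
      case False
      then obtain b where "matching h ?c b" using M c ci by blast
      thus ?thesis using LR by (metis nth_mem)
    qed
    then obtain i where i: "i < length as" "as!i = ?c" by (metis in_set_conv_nth)
    hence "x = ord ! i" using c by (simp add: ord_def)
    thus "x \<in> set ord" using i len_ord by simp
  qed
next
  show "set ord \<subseteq> ops h'"
  proof
    fix x assume "x \<in> set ord"
    then obtain i where i: "i < length as" "x = cnt (as!i)" by (auto simp: ord_def)
    thus "x \<in> ops h'" using as_cnt[OF i(1)] ent len_h' by (auto simp: ops_def)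
  qed
qed

lemma proj_map_nth: "proj p (map (nth h) xs) = map (nth h) (filter (\<lambda>i. ev_proc (h!i) = p) xs)"
  by (simp add: proj_def filter_map o_def)

lemma take_map_nth: "c \<le> length h \<Longrightarrow> take c h = map (nth h) [0..<c]"
  by (simp add: list_eq_iff_nth_eq)

lemma proj_take: "c \<le> length h \<Longrightarrow> proj p (take c h) = map (nth h) (filter (\<lambda>i. ev_proc (h!i) = p) [0..<c])"
  using take_map_nth proj_map_nth by metis

lemma proj_hk: "proj p hk = map (nth h) (filter (\<lambda>i. i \<notin> D \<and> ev_proc (h!i) = p) [0..<length h])"
  by (simp add: hk_def ks_def proj_map_nth filter_filter conj_commute)

lemma proj_hk_full: "(\<forall>d\<in>D. ev_proc (h!d) \<noteq> p) \<Longrightarrow> proj p hk = proj p h"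
proof -
  assume A: "\<forall>d\<in>D. ev_proc (h!d) \<noteq> p"
  have "filter (\<lambda>i. i \<notin> D \<and> ev_proc (h!i) = p) [0..<length h] = filter (\<lambda>i. ev_proc (h!i) = p) [0..<length h]"
    using A by (intro filter_cong) auto
  thus ?thesis using proj_hk proj_take[of "length h" p] by simp
qed

lemma pending_odd: "pending h a \<Longrightarrow> odd (length (proj (ev_proc (h!a)) h))"
proof -
  assume pa: "pending h a"
  let ?p = "ev_proc (h!a)"
  have al: "a < length h" "is_inv (h!a)" using pa unfolding pending_def by auto
  have "h = take a h @ [h!a] @ drop (Suc a) h" using al id_take_nth_drop by simp
  moreover have "proj ?p (drop (Suc a) h) = []"
    unfolding proj_def filter_empty_conv
  proof
    fix x assume "x \<in> set (drop (Suc a) h)"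
    then obtain k where "k < length (drop (Suc a) h)" "x = drop (Suc a) h ! k" by (metis in_set_conv_nth)
    hence "x = h ! (Suc a + k)" "Suc a + k < length h" by auto
    thus "ev_proc x \<noteq> ?p" using pending_notin_between[OF pa] by simp
  qed
  ultimately have "length (proj ?p h) = Suc (length (proj ?p (take a h)))"
    by (metis append_Nil2 length_append_singleton proj_append proj_single)
  moreover have "even (length (proj ?p (take a h)))" using wf al unfolding wf_hist_iff by blast
  ultimately show ?thesis by simp
qed

lemma proj_xt: "proj p xt = map (\<lambda>i. Res (ev_proc (h!(as!i))) (Resp (rs!i))) (filter (\<lambda>i. ev_proc (h!(as!i)) = p) PL)"
  by (simp add: xt_def proj_def filter_map o_def)

lemma D_proc: "d \<in> D \<Longrightarrow> pending h a \<Longrightarrow> ev_proc (h!d) = ev_proc (h!a) \<Longrightarrow> d = a"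
  using D_pending pending_unique by blast

lemma wf_h': "wf_hist h'"
  unfolding wf_hist_iff
proof (intro allI impI)
  fix x assume x: "x < length h'"
  show "is_inv (h'!x) \<longleftrightarrow> even (length (proj (ev_proc (h'!x)) (take x h')))"
  proof (cases "x < length ks")
    case True
    let ?c = "ks!x"
    have c: "?c < length h" "?c \<notin> D" "cnt ?c = x" using ks_elem True by auto
    have hx: "h'!x = h!?c" using h'_nth_hk True by simp
    let ?p = "ev_proc (h!?c)"
    have "take x h' = take x hk" using True len_hk by (simp add: h'_def)
    also have "\<dots> = map (nth h) (take x ks)" by (simp add: hk_def take_map)
    also have "\<dots> = map (nth h) (filter (\<lambda>i. i \<notin> D) [0..<?c])" using take_ks[of ?c] c by simp
    finally have "proj ?p (take x h') = map (nth h) (filter (\<lambda>i. ev_proc (h!i) = ?p) (filter (\<lambda>i. i \<notin> D) [0..<?c]))"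
      by (simp add: proj_map_nth)
    also have "filter (\<lambda>i. ev_proc (h!i) = ?p) (filter (\<lambda>i. i \<notin> D) [0..<?c]) = filter (\<lambda>i. ev_proc (h!i) = ?p) [0..<?c]"
      unfolding filter_filter
    proof (intro filter_cong)
      fix i assume "i \<in> set [0..<?c]"
      hence "i < ?c" by simp
      thus "(i \<notin> D \<and> ev_proc (h!i) = ?p) = (ev_proc (h!i) = ?p)"
        using pending_notin_between D_pending c by fastforce
    qed simp
    finally have "proj ?p (take x h') = proj ?p (take ?c h)" using proj_take c by simp
    thus ?thesis using wf c hx unfolding wf_hist_iff by simp
  next
    case False
    then obtain e where e: "x = length ks + e" "e < length PL" using x len_h' by (metis add_less_cancel_left le_Suc_ex not_less)
    let ?k = "PL!e" let ?a = "as!?k" let ?p = "ev_proc (h!?a)"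
    have k: "?k < length as" "pending h ?a" using PL_elem e by auto
    have hx: "h'!x = Res ?p (Resp (rs!?k))" using h'_nth_ext ext_nth e len_ext by simp
    have "take x h' = hk @ take e xt" using e len_hk by (simp add: h'_def)
    moreover have "proj ?p (take e xt) = []"
      unfolding proj_def filter_empty_conv
    proof
      fix y assume "y \<in> set (take e xt)"
      then obtain e' where e': "e' < e" "y = xt ! e'" using e len_ext by (auto simp: in_set_conv_nth)
      have e'l: "e' < length PL" using e' e by simp
      have "y = Res (ev_proc (h!(as!(PL!e')))) (Resp (rs!(PL!e')))" using e' ext_nth e'l by simp
      thus "ev_proc y \<noteq> ?p" using ext_proc_inj[OF e'l e(2)] e' by auto
    qed
    moreover have "proj ?p hk = proj ?p h"
      using proj_hk_full D_proc k as_notD by metis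
    ultimately have "proj ?p (take x h') = proj ?p h" by simp
    thus ?thesis using hx pending_odd[OF k(2)] by simp
  qed
qed

lemma even_h': "even (length (proj p h'))"
proof (cases "\<exists>a. pending h a \<and> ev_proc (h!a) = p")
  case True
  then obtain a where a: "pending h a" "ev_proc (h!a) = p" by blast
  show ?thesis
  proof (cases "a \<in> D")
    case True
    have "filter (\<lambda>i. i \<notin> D \<and> ev_proc (h!i) = p) [0..<length h] = filter (\<lambda>i. ev_proc (h!i) = p) [0..<a]"
    proof -
      have al: "a < length h" using a unfolding pending_def by simp
      have sp: "[0..<length h] = [0..<a] @ [a..<length h]"
        using upt_add_eq_append[of 0 a "length h - a"] al by simp
      have "filter (\<lambda>i. i \<notin> D \<and> ev_proc (h!i) = p) [0..<a] = filter (\<lambda>i. ev_proc (h!i) = p) [0..<a]"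
        using D_proc a by (intro filter_cong) auto
      moreover have "filter (\<lambda>i. i \<notin> D \<and> ev_proc (h!i) = p) [a..<length h] = []"
        unfolding filter_empty_conv
      proof
        fix i assume "i \<in> set [a..<length h]"
        hence "a \<le> i" "i < length h" by auto
        thus "\<not> (i \<notin> D \<and> ev_proc (h!i) = p)"
          using True a pending_notin_between[OF a(1)] by (cases "i = a") auto
      qed
      ultimately show ?thesis using sp by simp
    qed
    hence "proj p hk = proj p (take a h)" using proj_hk proj_take[of a p] a unfolding pending_def by simp
    moreover have "proj p xt = []"
      unfolding proj_xt map_is_Nil_conv filter_empty_conv
    proof (intro ballI)
      fix i assume "i \<in> set PL"
      hence i: "i < length as" "pending h (as!i)" by (auto simp: PL_def)
      show "ev_proc (h!(as!i)) \<noteq> p"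
        using pending_unique[OF i(2) a(1)] a(2) True as_notD[OF i(1)] by auto
    qed
    moreover have "even (length (proj p (take a h)))" using wf a unfolding wf_hist_iff pending_def by blast
    ultimately show ?thesis by (simp add: h'_def)
  next
    case False
    hence "a \<in> set as" using a by (simp add: D_def)
    then obtain k where k: "k < length as" "as!k = a" by (metis in_set_conv_nth)
    have "proj p hk = proj p h" using proj_hk_full D_proc a False by metis
    moreover have "length (proj p xt) = 1"
    proof -
      have "set (filter (\<lambda>i. ev_proc (h!(as!i)) = p) PL) = {k}"
      proof (rule set_eqI)
        fix i
        have "i \<in> set (filter (\<lambda>i. ev_proc (h!(as!i)) = p) PL) \<longleftrightarrow>
              (i < length as \<and> pending h (as!i) \<and> ev_proc (h!(as!i)) = p)" by (auto simp: PL_def)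
        also have "\<dots> \<longleftrightarrow> i = k"
        proof
          assume i: "i < length as \<and> pending h (as!i) \<and> ev_proc (h!(as!i)) = p"
          hence "as!i = a" using pending_unique a by metis
          thus "i = k" using dist i k nth_eq_iff_index_eq by metis
        qed (use k a in auto)
        finally show "i \<in> set (filter (\<lambda>i. ev_proc (h!(as!i)) = p) PL) \<longleftrightarrow> i \<in> {k}" by simp
      qed
      moreover have "distinct (filter (\<lambda>i. ev_proc (h!(as!i)) = p) PL)" using PL_dist by simp
      ultimately show ?thesis unfolding proj_xt by (metis distinct_card card.empty card_insert_disjoint empty_iff finite.intros(1) length_map One_nat_def)
    qed
    moreover have "odd (length (proj p h))" using pending_odd[OF a(1)] a(2) by simp
    ultimately show ?thesis by (simp add: h'_def)
  qed
next
  case False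
  hence ev: "even (length (proj p h))" using pend_even by blast
  have "proj p hk = proj p h" using proj_hk_full False D_pending by blast
  moreover have "proj p xt = []"
    unfolding proj_xt map_is_Nil_conv filter_empty_conv
  proof (intro ballI)
    fix i assume "i \<in> set PL"
    hence i: "pending h (as!i)" by (auto simp: PL_def)
    thus "ev_proc (h!(as!i)) \<noteq> p" using False by blast
  qed
  ultimately show ?thesis using ev by (simp add: h'_def)
qed

theorem result: "\<exists>h' pt. is_completion h h' \<and> linearization h' pt \<and> conforms \<delta> s0 h' pt"
proof (intro exI conjI)
  show "is_completion h h'"
    unfolding is_completion_def
  proof (intro exI conjI)
    show "\<forall>i\<in>D. pending h i" using D_pending by blast
    show "\<forall>e\<in>set xt. \<not> is_inv e" by (auto simp: xt_def)
    show "h' = map (\<lambda>i. h ! i) (filter (\<lambda>i. i \<notin> D) [0..<length h]) @ xt"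
      by (simp add: h'_def hk_def ks_def)
    show "complete_hist h'" using wf_h' even_h' by (simp add: complete_hist_def)
  qed
  show "linearization h' pt"
    unfolding linearization_def
  proof (intro conjI ballI allI impI)
    show "inj_on pt (ops h')"
      unfolding ops_h'
    proof (rule inj_onI)
      fix x y assume "x \<in> set ord" "y \<in> set ord" "pt x = pt y"
      then obtain i j where ij: "i < length as" "x = cnt (as!i)" "j < length as" "y = cnt (as!j)" "g i = g j"
        by (auto simp: ord_def pt_ord)
      hence "i = j" using g_mono by (metis less_irrefl nat_neq_iff)
      thus "x = y" using ij by simp
    qed
  next
    fix x j assume x: "x \<in> ops h'" and m: "matching h' x j"
    then obtain i where i: "i < length as" "x = cnt (as!i)" unfolding ops_h' by (auto simp: ord_def)
    obtain j0 where j0: "matching h' (cnt (as!i)) j0" "cnt (ns!i) \<le> j0" using resp_exists[OF i(1)] by blast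
    have "j = j0" using matching_unique m j0 i by simp
    thus "real x \<le> pt x" "pt x \<le> real j" using pt_ord g_low g_high i j0 by fastforce+
  qed
  show "conforms \<delta> s0 h' pt"
    unfolding conforms_def
  proof (intro exI[of _ ord] exI[of _ sts] conjI allI impI)
    show "distinct ord" by (rule ord_dist)
    show "set ord = ops h'" using ops_h' by simp
    show "sorted_wrt (\<lambda>a b. pt a < pt b) ord"
      unfolding sorted_wrt_iff_nth_less len_ord
      using ord_nth len_ord pt_ord g_mono by auto
    show "length sts = Suc (length ord)" using len_sts len_ord by simp
    show "sts ! 0 = s0" by (rule st0)
    fix k assume k: "k < length ord"
    hence kl: "k < length as" using len_ord by simp
    obtain j0 where j0: "matching h' (cnt (as!k)) j0" "res_val (h'!j0) = Resp (rs!k)"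
      using resp_exists[OF kl] by blast
    show "\<exists>j r. matching h' (ord ! k) j \<and> res_val (h' ! j) = Resp r \<and>
        (sts ! k, inv_op (h' ! (ord ! k)), sts ! Suc k, r) \<in> \<delta>"
      using j0 chain kl as_cnt[OF kl] ord_nth[OF k] by auto
  qed
qed

end


abbreviation pcq :: "('p,'o,'r,'s) conf \<Rightarrow> 'p \<Rightarrow> nat" where "pcq c q \<equiv> l_pc (cL c q)"
abbreviation ltq :: "('p,'o,'r,'s) conf \<Rightarrow> 'p \<Rightarrow> nat" where "ltq c q \<equiv> l_t (cL c q)"

definition valid :: "('p,'o,'r,'s) conf \<Rightarrow> nat \<Rightarrow> bool" where "valid c t \<longleftrightarrow> 1 \<le> t \<and> t < cC c"
definition tproc :: "('p,'o,'r) event list \<Rightarrow> (nat \<Rightarrow> nat) \<Rightarrow> nat \<Rightarrow> 'p" where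
  "tproc h tm t = ev_proc (h ! tm t)"
definition topo :: "('p,'o,'r) event list \<Rightarrow> (nat \<Rightarrow> nat) \<Rightarrow> nat \<Rightarrow> 'o" where
  "topo h tm t = inv_op (h ! tm t)"
definition fresh3 :: "('p,'o,'r,'s) conf \<Rightarrow> 'p \<Rightarrow> nat \<Rightarrow> bool" where
  "fresh3 c q t \<longleftrightarrow> pcq c q = 3 \<and> ltq c q = t"
definition validA :: "('p,'o,'r) event list \<Rightarrow> ('p,'o,'r,'s) conf \<Rightarrow> (nat \<Rightarrow> nat) \<Rightarrow> nat \<times> 'o aop \<times> 'p ptr \<Rightarrow> bool" where
  "validA h c tm tr \<longleftrightarrow> tr = (0, NOOP, HNoop) \<or> (valid c (fst tr) \<and> fst (snd tr) = Op (topo h tm (fst tr))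
     \<and> snd (snd tr) = HP (tproc h tm (fst tr)) \<and> \<not> fresh3 c (tproc h tm (fst tr)) (fst tr))"

type_synonym ('p,'r,'s) entry = "nat \<times> 'p \<times> nat \<times> 'r \<times> 's"

definition et :: "('p,'r,'s) entry \<Rightarrow> nat" where "et e = fst e"
definition eq :: "('p,'r,'s) entry \<Rightarrow> 'p" where "eq e = fst (snd e)"
definition en :: "('p,'r,'s) entry \<Rightarrow> nat" where "en e = fst (snd (snd e))"
definition er :: "('p,'r,'s) entry \<Rightarrow> 'r" where "er e = fst (snd (snd (snd e)))"
definition es :: "('p,'r,'s) entry \<Rightarrow> 's" where "es e = snd (snd (snd (snd e)))"
lemma entry_sel[simp]: "et (t,q,n,r,s) = t" "eq (t,q,n,r,s) = q" "en (t,q,n,r,s) = n"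
  "er (t,q,n,r,s) = r" "es (t,q,n,r,s) = s"
  by (simp_all add: et_def eq_def en_def er_def es_def)

definition stup :: "'s \<Rightarrow> ('p,'r,'s) entry list \<Rightarrow> nat \<Rightarrow> nat \<times> 's \<times> 'r rval \<times> 'p ptr" where
  "stup s0 lg k = (if k = 0 then (0, s0, Bot, HNoop)
     else (et (lg!(k-1)), es (lg!(k-1)), Resp (er (lg!(k-1))), HP (eq (lg!(k-1)))))"
definition stst :: "'s \<Rightarrow> ('p,'r,'s) entry list \<Rightarrow> nat \<Rightarrow> 's" where
  "stst s0 lg k = (if k = 0 then s0 else es (lg!(k-1)))"

definition rd :: "('p,'o,'r,'s) loc \<Rightarrow> nat \<times> 's \<times> 'r rval \<times> 'p ptr" where
  "rd l = (l_ts l, l_ss l, l_rs l, l_ps l)"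
definition a1 :: "('p,'o,'r,'s) loc \<Rightarrow> nat \<times> 'o aop \<times> 'p ptr" where
  "a1 l = (l_t1 l, l_o1 l, l_p1 l)"

definition I_time :: "('p,'o,'r) event list \<Rightarrow> ('p,'o,'r,'s) conf \<Rightarrow> (nat \<Rightarrow> nat) \<Rightarrow> bool" where
  "I_time h c tm \<longleftrightarrow> 1 \<le> cC c \<and> (\<forall>t. valid c t \<longrightarrow> tm t < length h \<and> is_inv (h ! tm t))
     \<and> inj_on tm {t. valid c t}"

definition Ppc :: "('p,'o,'r) event list \<Rightarrow> ('p,'o,'r,'s) conf \<Rightarrow> (nat \<Rightarrow> nat) \<Rightarrow> 'p \<Rightarrow> ('p,'o,'r,'s) loc \<Rightarrow> bool" where
  "Ppc h c tm q l \<longleftrightarrow> l_pc l \<in> {0,2,3,4,5,6,7,8,9,11,12,13,14}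
     \<and> (l_pc l = 0 \<longleftrightarrow> even (length (proj q h)))
     \<and> (\<forall>a. l_pc l = 0 \<longrightarrow> pending h a \<longrightarrow> ev_proc (h!a) \<noteq> q)
     \<and> (l_pc l \<noteq> 0 \<longrightarrow> (\<exists>a. pending h a \<and> h!a = Inv q (l_op l)
          \<and> (l_pc l = 2 \<longrightarrow> (\<forall>t. valid c t \<longrightarrow> tm t \<noteq> a))
          \<and> (3 \<le> l_pc l \<longrightarrow> valid c (l_t l) \<and> tm (l_t l) = a)))"

definition I_hist :: "('p,'o,'r) event list \<Rightarrow> (nat \<Rightarrow> nat) \<Rightarrow> ('p,'r,'s) entry list \<Rightarrow> bool" where
  "I_hist h tm lg \<longleftrightarrow> wf_hist h \<and> (\<forall>a<length h. is_inv (h!a) \<longrightarrow> pending h a \<or> (\<exists>b. matching h a b))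
     \<and> (\<forall>a b. matching h a b \<longrightarrow> (\<exists>e\<in>set lg. tm (et e) = a \<and> en e \<le> b \<and> res_val (h!b) = Resp (er e)))"

definition I_log :: "('s \<times> 'o \<times> 's \<times> 'r) set \<Rightarrow> 's \<Rightarrow> ('p,'o,'r) event list \<Rightarrow> ('p,'o,'r,'s) conf
    \<Rightarrow> (nat \<Rightarrow> nat) \<Rightarrow> ('p,'r,'s) entry list \<Rightarrow> bool" where
  "I_log \<delta> s0 h c tm lg \<longleftrightarrow> (\<forall>e\<in>set lg. valid c (et e) \<and> eq e = tproc h tm (et e) \<and> \<not> fresh3 c (eq e) (et e)
        \<and> tm (et e) < en e \<and> en e \<le> length h)
     \<and> distinct (map et lg)
     \<and> (\<forall>i j. i \<le> j \<longrightarrow> j < length lg \<longrightarrow> en (lg!i) \<le> en (lg!j))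
     \<and> (\<forall>i<length lg. (stst s0 lg i, topo h tm (et (lg!i)), es (lg!i), er (lg!i)) \<in> \<delta>)
     \<and> cS c = stup s0 lg (length lg)"

definition PH :: "('p,'o,'r) event list \<Rightarrow> ('p,'o,'r,'s) conf \<Rightarrow> (nat \<Rightarrow> nat) \<Rightarrow> ('p,'r,'s) entry list
   \<Rightarrow> 'p \<Rightarrow> nat \<times> 'r rval \<Rightarrow> ('p,'o,'r,'s) loc \<Rightarrow> bool" where
  "PH h c tm lg q hq l \<longleftrightarrow>
     (\<forall>t. hq = (t, Null) \<longrightarrow> valid c t \<longrightarrow> tproc h tm t = q \<longrightarrow> 3 \<le> l_pc l \<and> l_pc l \<le> 13 \<and> l_t l = t)
   \<and> (4 \<le> l_pc l \<longrightarrow> hq = (l_t l, Null) \<or> (\<exists>e\<in>set lg. et e = l_t l \<and> hq = (l_t l, Resp (er e))))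
   \<and> (l_pc l = 14 \<longrightarrow> hq \<noteq> (l_t l, Null))"

definition W :: "('p,'o,'r,'s) conf \<Rightarrow> ('p,'r,'s) entry list \<Rightarrow> bool" where
  "W c lg \<longleftrightarrow> (\<forall>j. Suc j < length lg \<longrightarrow> cH c (eq (lg!j)) \<noteq> (et (lg!j), Null))"

definition Ploc :: "('s \<times> 'o \<times> 's \<times> 'r) set \<Rightarrow> 's \<Rightarrow> ('p,'o,'r) event list \<Rightarrow> ('p,'o,'r,'s) conf
    \<Rightarrow> (nat \<Rightarrow> nat) \<Rightarrow> ('p,'r,'s) entry list \<Rightarrow> ('p,'o,'r,'s) loc \<Rightarrow> bool" where
  "Ploc \<delta> s0 h c tm lg l \<longleftrightarrow>
     (6 \<le> l_pc l \<longrightarrow> l_pc l \<le> 13 \<longrightarrow> (\<exists>k\<le>length lg. rd l = stup s0 lg k))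
   \<and> (7 \<le> l_pc l \<longrightarrow> l_pc l \<le> 13 \<longrightarrow> rd l = cS c \<longrightarrow> lg \<noteq> [] \<longrightarrow>
        cH c (eq (last lg)) \<noteq> (et (last lg), Null))
   \<and> (l_pc l \<in> {9,11,12,13} \<longrightarrow> validA h c tm (a1 l))
   \<and> (l_pc l \<in> {11,12} \<longrightarrow> 1 \<le> l_t1 l \<and> (l_t1 l \<notin> et ` set lg \<or> rd l \<noteq> cS c))
   \<and> (l_pc l = 12 \<longrightarrow> (\<exists>r. l_r1 l = Resp r \<and> (l_ss l, topo h tm (l_t1 l), l_s1 l, r) \<in> \<delta>))"

definition INV where
  "INV \<delta> s0 h c tm lg \<longleftrightarrow> I_time h c tm \<and> (\<forall>q. Ppc h c tm q (cL c q)) \<and> I_hist h tm lg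
     \<and> I_log \<delta> s0 h c tm lg \<and> (\<forall>q. PH h c tm lg q (cH c q) (cL c q)) \<and> W c lg
     \<and> validA h c tm (cA c) \<and> (\<forall>x. Ploc \<delta> s0 h c tm lg (cL c x))"

lemma updL_simps[simp]: "cC (updL c p f) = cC c" "cA (updL c p f) = cA c" "cS (updL c p f) = cS c"
  "cH (updL c p f) = cH c" "cL (updL c p f) = (cL c)(p := f (cL c p))"
  by (simp_all add: updL_def)

lemma init_INV: "init_conf s0 c0 \<Longrightarrow> INV \<delta> s0 [] c0 (\<lambda>_. 0) []"
  unfolding INV_def init_conf_def I_time_def Ppc_def I_hist_def I_log_def PH_def W_def Ploc_def
  by (auto simp: valid_def pending_def matching_def wf_hist_def stup_def validA_def inj_on_def)

lemma valid_cong: "cC c' = cC c \<Longrightarrow> valid c' = valid c"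
  by (simp add: valid_def fun_eq_iff)

lemma validA_cong: assumes "cC c' = cC c" "fresh3 c' = fresh3 c" shows "validA h c' tm = validA h c tm"
  unfolding validA_def valid_cong[OF assms(1)] assms(2) ..

lemma Ploc_cong: assumes "cC c' = cC c" "fresh3 c' = fresh3 c" "cS c' = cS c" "cH c' = cH c"
  shows "Ploc \<delta> s0 h c' tm lg = Ploc \<delta> s0 h c tm lg"
  unfolding Ploc_def[abs_def] validA_cong[OF assms(1,2)] assms(3,4) ..

lemma Ppc_cong: assumes "cC c' = cC c" shows "Ppc h c' tm = Ppc h c tm"
  unfolding Ppc_def[abs_def] valid_cong[OF assms] ..

lemma PH_cong: assumes "cC c' = cC c" shows "PH h c' tm lg = PH h c tm lg"
  unfolding PH_def[abs_def] valid_cong[OF assms] ..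

lemma I_time_cong: assumes "cC c' = cC c" shows "I_time h c' tm = I_time h c tm"
  unfolding I_time_def valid_cong[OF assms] assms ..

lemma I_log_cong: assumes "cC c' = cC c" "fresh3 c' = fresh3 c" "cS c' = cS c"
  shows "I_log \<delta> s0 h c' tm lg = I_log \<delta> s0 h c tm lg"
  unfolding I_log_def valid_cong[OF assms(1)] assms(2,3) ..

lemma W_cong: "cH c' = cH c \<Longrightarrow> W c' lg = W c lg" by (simp add: W_def)

lemma fresh3_upd: assumes "cL c' = (cL c)(p := l')" "l_pc l' = 3 \<longleftrightarrow> pcq c p = 3"
  "l_pc l' = 3 \<Longrightarrow> l_t l' = ltq c p" shows "fresh3 c' = fresh3 c"
  using assms by (auto simp: fresh3_def fun_eq_iff)

lemma local_step:
  assumes I: "INV \<delta> s0 h c tm lg"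
    and g: "cC c' = cC c" "cS c' = cS c" "cH c' = cH c" "cL c' = (cL c)(p := l')"
    and f: "fresh3 c' = fresh3 c"
    and A: "validA h c tm (cA c')"
    and P1: "Ppc h c tm p l'" and P2: "PH h c tm lg p (cH c p) l'" and P3: "Ploc \<delta> s0 h c tm lg l'"
  shows "INV \<delta> s0 h c' tm lg"
  unfolding INV_def
proof (intro conjI allI)
  show "I_time h c' tm" using I I_time_cong[OF g(1)] by (simp add: INV_def)
  show "I_hist h tm lg" using I by (simp add: INV_def)
  show "I_log \<delta> s0 h c' tm lg" using I I_log_cong[OF g(1) f g(2)] by (simp add: INV_def)
  show "W c' lg" using I W_cong[OF g(3)] by (simp add: INV_def)
  show "validA h c' tm (cA c')" using A validA_cong[OF g(1) f] by simp
  fix q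
  show "Ppc h c' tm q (cL c' q)" using I P1 Ppc_cong[OF g(1)] g(4) by (cases "q = p") (simp_all add: INV_def)
  show "PH h c' tm lg q (cH c' q) (cL c' q)" using I P2 PH_cong[OF g(1)] g(3,4) by (cases "q = p") (simp_all add: INV_def)
  show "Ploc \<delta> s0 h c' tm lg (cL c' q)" using I P3 Ploc_cong[OF g(1) f g(2) g(3)] g(4) by (cases "q = p") (simp_all add: INV_def)
qed


lemma INV_parts: assumes "INV \<delta> s0 h c tm lg"
  shows "I_time h c tm" "\<And>q. Ppc h c tm q (cL c q)" "I_hist h tm lg" "I_log \<delta> s0 h c tm lg"
    "\<And>q. PH h c tm lg q (cH c q) (cL c q)" "W c lg" "validA h c tm (cA c)" "\<And>x. Ploc \<delta> s0 h c tm lg (cL c x)"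
  using assms by (simp_all add: INV_def)



lemma uline4: assumes I: "INV \<delta> s0 h c tm lg" and pc: "pcq c p = 4"
  shows "INV \<delta> s0 h (updL c p (\<lambda>l. l\<lparr>l_pc := (if cH c p = (l_t l, Null) then 5 else 14)\<rparr>)) tm lg"
proof -
  let ?l = "(cL c p)\<lparr>l_pc := (if cH c p = (ltq c p, Null) then 5 else 14)\<rparr>"
  note o = INV_parts[OF I]
  show ?thesis
  proof (rule local_step[OF I, where l' = ?l and p = p])
    show "fresh3 (updL c p (\<lambda>l. l\<lparr>l_pc := (if cH c p = (l_t l, Null) then 5 else 14)\<rparr>)) = fresh3 c"
      by (rule fresh3_upd[where p = p and l' = ?l]) (use pc in auto)
    show "Ppc h c tm p ?l"
      by (cases "cH c p = (ltq c p, Null)") (use o(2)[of p] pc in \<open>simp_all add: Ppc_def\<close>)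
    show "PH h c tm lg p (cH c p) ?l"
    proof (cases "cH c p = (ltq c p, Null)")
      case True then show ?thesis using o(5)[of p] pc by (simp add: PH_def)
    next
      case False
      have "\<And>t. cH c p = (t, Null) \<Longrightarrow> valid c t \<Longrightarrow> tproc h tm t = p \<Longrightarrow> False"
        using o(5)[of p] pc False unfolding PH_def by force
      then show ?thesis using o(5)[of p] pc False unfolding PH_def by auto
    qed
    show "Ploc \<delta> s0 h c tm lg ?l" by (simp add: Ploc_def)
  qed (simp_all add: o(7))
qed

lemma stup_len: "k \<le> length lg \<Longrightarrow> fst (snd (stup s0 lg k)) = stst s0 lg k"
  by (simp add: stup_def stst_def)

lemma uline5: assumes I: "INV \<delta> s0 h c tm lg" and pc: "pcq c p = 5" and S: "cS c = (t, s, r, x)"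
  shows "INV \<delta> s0 h (updL c p (\<lambda>l. l\<lparr>l_pc := 6, l_ts := t, l_ss := s, l_rs := r, l_ps := x\<rparr>)) tm lg"
proof -
  let ?l = "(cL c p)\<lparr>l_pc := 6, l_ts := t, l_ss := s, l_rs := r, l_ps := x\<rparr>"
  note o = INV_parts[OF I]
  have S': "cS c = stup s0 lg (length lg)" using o(4) by (simp add: I_log_def)
  show ?thesis
  proof (rule local_step[OF I, where l' = ?l and p = p])
    show "fresh3 (updL c p (\<lambda>l. l\<lparr>l_pc := 6, l_ts := t, l_ss := s, l_rs := r, l_ps := x\<rparr>)) = fresh3 c"
      by (rule fresh3_upd[where p = p and l' = ?l]) (use pc in auto)
    show "Ppc h c tm p ?l" using o(2)[of p] pc by (auto simp: Ppc_def)
    show "PH h c tm lg p (cH c p) ?l" using o(5)[of p] pc by (auto simp: PH_def)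
    show "Ploc \<delta> s0 h c tm lg ?l" using S S' by (auto simp: Ploc_def rd_def)
  qed (simp_all add: o(7))
qed

lemma uline8: assumes I: "INV \<delta> s0 h c tm lg" and pc: "pcq c p = 8" and A: "cA c = (t, oo, x)"
  shows "INV \<delta> s0 h (updL c p (\<lambda>l. l\<lparr>l_pc := 9, l_t1 := t, l_o1 := oo, l_p1 := x\<rparr>)) tm lg"
proof -
  let ?l = "(cL c p)\<lparr>l_pc := 9, l_t1 := t, l_o1 := oo, l_p1 := x\<rparr>"
  note o = INV_parts[OF I]
  show ?thesis
  proof (rule local_step[OF I, where l' = ?l and p = p])
    show "fresh3 (updL c p (\<lambda>l. l\<lparr>l_pc := 9, l_t1 := t, l_o1 := oo, l_p1 := x\<rparr>)) = fresh3 c"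
      by (rule fresh3_upd[where p = p and l' = ?l]) (use pc in auto)
    show "Ppc h c tm p ?l" using o(2)[of p] pc by (auto simp: Ppc_def)
    show "PH h c tm lg p (cH c p) ?l" using o(5)[of p] pc by (auto simp: PH_def)
    show "Ploc \<delta> s0 h c tm lg ?l" using o(8)[of p] o(7) pc A by (auto simp: Ploc_def rd_def a1_def)
  qed (simp_all add: o(7))
qed

lemma deref_HP: "deref c (HP q) = cH c q" by (simp add: deref_def)
lemma deref_HNoop: "deref c HNoop = (0, Bot)" by (simp add: deref_def)

lemma uline9: assumes I: "INV \<delta> s0 h c tm lg" and pc: "pcq c p = 9"
  shows "INV \<delta> s0 h (updL c p (\<lambda>l. l\<lparr>l_pc := (if deref c (l_p1 l) = (l_t1 l, Null) then 11 else 13)\<rparr>)) tm lg"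
proof -
  let ?l = "(cL c p)\<lparr>l_pc := (if deref c (l_p1 (cL c p)) = (l_t1 (cL c p), Null) then 11 else 13)\<rparr>"
  note o = INV_parts[OF I]
  have X11: "1 \<le> l_t1 (cL c p) \<and> (l_t1 (cL c p) \<notin> et ` set lg \<or> rd (cL c p) \<noteq> cS c)"
    if d: "deref c (l_p1 (cL c p)) = (l_t1 (cL c p), Null)"
  proof -
    let ?t = "l_t1 (cL c p)"
    have vA: "validA h c tm (a1 (cL c p))" using o(8)[of p] pc by (simp add: Ploc_def)
    have nz: "a1 (cL c p) \<noteq> (0, NOOP, HNoop)" using d by (auto simp: a1_def deref_HNoop)
    hence v: "valid c ?t" "l_p1 (cL c p) = HP (tproc h tm ?t)" using vA by (auto simp: validA_def a1_def)
    have Hq: "cH c (tproc h tm ?t) = (?t, Null)" using d v by (simp add: deref_HP)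
    have "\<not> (?t \<in> et ` set lg \<and> rd (cL c p) = cS c)"
    proof
      assume a: "?t \<in> et ` set lg \<and> rd (cL c p) = cS c"
      then obtain j where j: "j < length lg" "et (lg!j) = ?t" by (metis imageE in_set_conv_nth)
      have eqj: "eq (lg!j) = tproc h tm ?t" using o(4) j by (auto simp: I_log_def)
      show False
      proof (cases "Suc j < length lg")
        case True
        thus False using o(6) j eqj Hq by (auto simp: W_def)
      next
        case False
        have ne: "lg \<noteq> []" using j by auto
        have "j = length lg - 1" using j False by linarith
        hence "lg!j = last lg" "lg \<noteq> []" using last_conv_nth[OF ne] ne by auto
        moreover have "lg \<noteq> [] \<longrightarrow> cH c (eq (last lg)) \<noteq> (et (last lg), Null)"
          using o(8)[of p] pc a by (simp add: Ploc_def)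
        ultimately show False using j eqj Hq by auto
      qed
    qed
    thus ?thesis using v by (auto simp: valid_def)
  qed
  show ?thesis
  proof (rule local_step[OF I, where l' = ?l and p = p])
    show "fresh3 (updL c p (\<lambda>l. l\<lparr>l_pc := (if deref c (l_p1 l) = (l_t1 l, Null) then 11 else 13)\<rparr>)) = fresh3 c"
      by (rule fresh3_upd[where p = p and l' = ?l]) (use pc in auto)
    show "Ppc h c tm p ?l" using o(2)[of p] pc by (auto simp: Ppc_def)
    show "PH h c tm lg p (cH c p) ?l" using o(5)[of p] pc by (auto simp: PH_def)
    show "Ploc \<delta> s0 h c tm lg ?l" using o(8)[of p] pc X11 by (auto simp: Ploc_def rd_def a1_def)
  qed (simp_all add: o(7))
qed

lemma uline11: assumes I: "INV \<delta> s0 h c tm lg" and pc: "pcq c p = 11" and op: "l_o1 (cL c p) = Op oo"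
  and d: "(l_ss (cL c p), oo, s', r') \<in> \<delta>"
  shows "INV \<delta> s0 h (updL c p (\<lambda>l. l\<lparr>l_pc := 12, l_s1 := s', l_r1 := Resp r'\<rparr>)) tm lg"
proof -
  let ?l = "(cL c p)\<lparr>l_pc := 12, l_s1 := s', l_r1 := Resp r'\<rparr>"
  note o = INV_parts[OF I]
  have vA: "validA h c tm (a1 (cL c p))" using o(8)[of p] pc by (simp add: Ploc_def)
  hence "oo = topo h tm (l_t1 (cL c p))" using op by (auto simp: validA_def a1_def)
  show ?thesis
  proof (rule local_step[OF I, where l' = ?l and p = p])
    show "fresh3 (updL c p (\<lambda>l. l\<lparr>l_pc := 12, l_s1 := s', l_r1 := Resp r'\<rparr>)) = fresh3 c"
      by (rule fresh3_upd[where p = p and l' = ?l]) (use pc in auto)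
    show "Ppc h c tm p ?l" using o(2)[of p] pc by (auto simp: Ppc_def)
    show "PH h c tm lg p (cH c p) ?l" using o(5)[of p] pc by (auto simp: PH_def)
    show "Ploc \<delta> s0 h c tm lg ?l" using o(8)[of p] pc d \<open>oo = _\<close> by (auto simp: Ploc_def rd_def a1_def)
  qed (simp_all add: o(7))
qed

lemma newA_valid: assumes I: "INV \<delta> s0 h c tm lg" and pc: "3 \<le> pcq c p" and f: "\<not> fresh3 c' p (ltq c p)"
  and cc: "cC c' = cC c"
  shows "validA h c' tm (ltq c p, Op (l_op (cL c p)), HP p)"
proof -
  note o = INV_parts[OF I]
  obtain a where a: "pending h a" "h!a = Inv p (l_op (cL c p))" "valid c (ltq c p)" "tm (ltq c p) = a"
    using o(2)[of p] pc by (auto simp: Ppc_def)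
  thus ?thesis using f valid_cong[OF cc] by (simp add: validA_def tproc_def topo_def inv_op_def)
qed

lemma uline7: assumes I: "INV \<delta> s0 h c tm lg" and pc: "pcq c p = 7"
  shows "INV \<delta> s0 h (updL (c\<lparr>cA := (if fst (cA c) > l_t (cL c p) then (l_t (cL c p), Op (l_op (cL c p)), HP p) else cA c)\<rparr>) p
          (\<lambda>l. l\<lparr>l_pc := 8\<rparr>)) tm lg" (is "INV _ _ _ ?c _ _")
proof -
  let ?l = "(cL c p)\<lparr>l_pc := 8\<rparr>"
  note o = INV_parts[OF I]
  have f: "fresh3 ?c = fresh3 c" by (rule fresh3_upd[where p = p and l' = ?l]) (use pc in auto)
  show ?thesis
  proof (rule local_step[OF I, where l' = ?l and p = p])
    show "fresh3 ?c = fresh3 c" by (rule f)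
    have nv: "validA h c tm (ltq c p, Op (l_op (cL c p)), HP p)"
      by (rule newA_valid[OF I]) (use pc in \<open>auto simp: fresh3_def\<close>)
    show "validA h c tm (cA ?c)" using o(7) nv by simp
    show "Ppc h c tm p ?l" using o(2)[of p] pc by (auto simp: Ppc_def)
    show "PH h c tm lg p (cH c p) ?l" using o(5)[of p] pc by (auto simp: PH_def)
    show "Ploc \<delta> s0 h c tm lg ?l" using o(8)[of p] pc by (auto simp: Ploc_def rd_def)
  qed (simp_all add: o(7))
qed

lemma uline13: assumes I: "INV \<delta> s0 h c tm lg" and pc: "pcq c p = 13"
  shows "INV \<delta> s0 h (updL (c\<lparr>cA := (if cA c = a1 (cL c p) then (l_t (cL c p), Op (l_op (cL c p)), HP p) else cA c)\<rparr>) p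
          (\<lambda>l. l\<lparr>l_pc := 4\<rparr>)) tm lg" (is "INV _ _ _ ?c _ _")
proof -
  let ?l = "(cL c p)\<lparr>l_pc := 4\<rparr>"
  note o = INV_parts[OF I]
  have f: "fresh3 ?c = fresh3 c" by (rule fresh3_upd[where p = p and l' = ?l]) (use pc in auto)
  show ?thesis
  proof (rule local_step[OF I, where l' = ?l and p = p])
    show "fresh3 ?c = fresh3 c" by (rule f)
    have nv: "validA h c tm (ltq c p, Op (l_op (cL c p)), HP p)"
      by (rule newA_valid[OF I]) (use pc in \<open>auto simp: fresh3_def\<close>)
    show "validA h c tm (cA ?c)" using o(7) nv by simp
    show "Ppc h c tm p ?l" using o(2)[of p] pc by (auto simp: Ppc_def)
    show "PH h c tm lg p (cH c p) ?l" using o(5)[of p] pc by (auto simp: PH_def)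
    show "Ploc \<delta> s0 h c tm lg ?l" by (simp add: Ploc_def)
  qed (simp_all add: o(7))
qed



definition NullMonoLog :: "('p,'o,'r,'s) conf \<Rightarrow> ('p,'o,'r,'s) conf \<Rightarrow> ('p,'r,'s) entry list \<Rightarrow> bool" where
  "NullMonoLog c c' lg \<longleftrightarrow> (\<forall>E\<in>set lg. cH c' (eq E) = (et E, Null) \<longrightarrow> cH c (eq E) = (et E, Null))"

lemma W_weak: "W c lg \<Longrightarrow> NullMonoLog c c' lg \<Longrightarrow> W c' lg"
  unfolding W_def NullMonoLog_def by (meson nth_mem Suc_lessD)

lemma validA_weak: "validA h c tm tr \<Longrightarrow> cC c' = cC c \<Longrightarrow> (\<forall>q t. fresh3 c' q t \<longrightarrow> fresh3 c q t) \<Longrightarrow> validA h c' tm tr"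
  unfolding validA_def using valid_cong[of c' c] by auto

lemma I_log_weak: "I_log \<delta> s0 h c tm lg \<Longrightarrow> cC c' = cC c \<Longrightarrow> cS c' = cS c \<Longrightarrow>
   (\<forall>q t. fresh3 c' q t \<longrightarrow> fresh3 c q t) \<Longrightarrow> I_log \<delta> s0 h c' tm lg"
  unfolding I_log_def using valid_cong[of c' c] by auto

lemma Ploc_weak: assumes P: "Ploc \<delta> s0 h c tm lg l" and g: "cC c' = cC c" "cS c' = cS c"
  and f: "\<forall>q t. fresh3 c' q t \<longrightarrow> fresh3 c q t" and N: "NullMonoLog c c' lg"
  shows "Ploc \<delta> s0 h c' tm lg l"
proof -
  have "lg \<noteq> [] \<Longrightarrow> cH c (eq (last lg)) \<noteq> (et (last lg), Null) \<Longrightarrow> cH c' (eq (last lg)) \<noteq> (et (last lg), Null)"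
    using N unfolding NullMonoLog_def by auto
  moreover have "validA h c tm (a1 l) \<Longrightarrow> validA h c' tm (a1 l)" using validA_weak g f by blast
  ultimately show ?thesis using P g unfolding Ploc_def by auto
qed

lemma gcas_cases: assumes "rd l = stup s0 lg k" "k \<le> length lg"
  shows "gcas_ptr c (l_ps l) (l_ts l, Null) (l_ts l, l_rs l) q = cH c q \<or>
    (\<exists>E\<in>set lg. cH c q = (et E, Null) \<and> gcas_ptr c (l_ps l) (l_ts l, Null) (l_ts l, l_rs l) q = (et E, Resp (er E)))"
proof (cases "k = 0")
  case True
  then have "l_ps l = HNoop" using assms by (simp add: rd_def stup_def)
  then show ?thesis by (simp add: gcas_ptr_def)
next
  case False
  let ?E = "lg!(k-1)"
  have E: "?E \<in> set lg" using False assms(2) by simp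
  have l: "l_ps l = HP (eq ?E)" "l_ts l = et ?E" "l_rs l = Resp (er ?E)" using assms(1) False by (simp_all add: rd_def stup_def)
  show ?thesis using E by (auto simp: gcas_ptr_def l)
qed

lemma PH_gcas: assumes "PH h c tm lg q hq l"
  and "hq' = hq \<or> (\<exists>E\<in>set lg. hq = (et E, Null) \<and> hq' = (et E, Resp (er E)))"
  shows "PH h c tm lg q hq' l"
  using assms unfolding PH_def by auto

lemma uline6: assumes I: "INV \<delta> s0 h c tm lg" and pc: "pcq c p = 6"
  shows "INV \<delta> s0 h (updL (c\<lparr>cH := gcas_ptr c (l_ps (cL c p)) (l_ts (cL c p), Null) (l_ts (cL c p), l_rs (cL c p))\<rparr>) p
          (\<lambda>l. l\<lparr>l_pc := 7\<rparr>)) tm lg" (is "INV _ _ _ ?c _ _")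
proof -
  let ?l = "cL c p" let ?l' = "?l\<lparr>l_pc := 7\<rparr>"
  let ?G = "gcas_ptr c (l_ps ?l) (l_ts ?l, Null) (l_ts ?l, l_rs ?l)"
  note o = INV_parts[OF I]
  obtain k where k: "k \<le> length lg" "rd ?l = stup s0 lg k" using o(8)[of p] pc by (auto simp: Ploc_def)
  have G: "\<And>q. ?G q = cH c q \<or> (\<exists>E\<in>set lg. cH c q = (et E, Null) \<and> ?G q = (et E, Resp (er E)))"
    using gcas_cases[OF k(2) k(1)] by blast
  have f: "fresh3 ?c = fresh3 c" by (rule fresh3_upd[where p = p and l' = ?l']) (use pc in auto)
  have N: "NullMonoLog c ?c lg" unfolding NullMonoLog_def using G by (auto) (metis rval.distinct(1) rval.distinct(3) prod.inject)
  have cc: "cC ?c = cC c" "cS ?c = cS c" by simp_all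
  show ?thesis unfolding INV_def
  proof (intro conjI allI)
    show "I_time h ?c tm" using o(1) I_time_cong[OF cc(1)] by simp
    show "I_hist h tm lg" using o(3) .
    show "I_log \<delta> s0 h ?c tm lg" using o(4) I_log_cong[OF cc(1) f cc(2)] by simp
    show "W ?c lg" using W_weak[OF o(6) N] .
    show "validA h ?c tm (cA ?c)" using o(7) validA_cong[OF cc(1) f] by simp
    fix q
    show "Ppc h ?c tm q (cL ?c q)" using o(2)[of q] pc Ppc_cong[OF cc(1)]
      by (cases "q = p") (auto simp: Ppc_def)
    have "PH h c tm lg q (cH c q) (cL ?c q)" using o(5)[of q] pc by (cases "q = p") (auto simp: PH_def)
    hence "PH h c tm lg q (?G q) (cL ?c q)" using PH_gcas[OF _ G[of q]] by blast
    thus "PH h ?c tm lg q (cH ?c q) (cL ?c q)" using PH_cong[OF cc(1)] by simp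
    show "Ploc \<delta> s0 h ?c tm lg (cL ?c q)"
    proof (cases "q = p")
      case False
      thus ?thesis using Ploc_weak[OF o(8)[of q] cc _ N] f by simp
    next
      case True
      have X6: "cH ?c (eq (last lg)) \<noteq> (et (last lg), Null)" if "rd ?l = cS c" "lg \<noteq> []"
      proof -
        have "cS c = stup s0 lg (length lg)" using o(4) by (simp add: I_log_def)
        hence "l_ps ?l = HP (eq (last lg))" "l_ts ?l = et (last lg)" "l_rs ?l = Resp (er (last lg))"
          using that by (simp_all add: rd_def stup_def last_conv_nth)
        thus ?thesis by (simp add: gcas_ptr_def)
      qed
      have rdl: "rd ?l' = rd ?l" by (simp add: rd_def)
      have "Ploc \<delta> s0 h ?c tm lg ?l'" unfolding Ploc_def using k X6 rdl by auto
      thus ?thesis using True by simp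
    qed
  qed
qed


lemma uline3: assumes I: "INV \<delta> s0 h c tm lg" and pc: "pcq c p = 3"
  shows "INV \<delta> s0 h (updL (c\<lparr>cH := (cH c)(p := (l_t (cL c p), Null))\<rparr>) p (\<lambda>l. l\<lparr>l_pc := 4\<rparr>)) tm lg"
    (is "INV _ _ _ ?c _ _")
proof -
  let ?l = "cL c p" let ?l' = "?l\<lparr>l_pc := 4\<rparr>"
  note o = INV_parts[OF I]
  have f: "\<forall>q t. fresh3 ?c q t \<longrightarrow> fresh3 c q t" by (auto simp: fresh3_def split: if_splits)
  have N: "NullMonoLog c ?c lg" unfolding NullMonoLog_def
  proof (intro ballI impI)
    fix E assume E: "E \<in> set lg" "cH ?c (eq E) = (et E, Null)"
    show "cH c (eq E) = (et E, Null)"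
    proof (cases "eq E = p")
      case True
      hence "et E = ltq c p" using E by simp
      moreover have "\<not> fresh3 c (eq E) (et E)" using o(4) E by (auto simp: I_log_def)
      ultimately show ?thesis using True pc by (simp add: fresh3_def)
    qed (use E in simp)
  qed
  have cc: "cC ?c = cC c" "cS ?c = cS c" by simp_all
  show ?thesis unfolding INV_def
  proof (intro conjI allI)
    show "I_time h ?c tm" using o(1) I_time_cong[OF cc(1)] by simp
    show "I_hist h tm lg" using o(3) .
    show "I_log \<delta> s0 h ?c tm lg" using I_log_weak[OF o(4) cc f] .
    show "W ?c lg" using W_weak[OF o(6) N] .
    show "validA h ?c tm (cA ?c)" using validA_weak[OF o(7) cc(1) f] by simp
    fix q
    show "Ppc h ?c tm q (cL ?c q)" using o(2)[of q] pc Ppc_cong[OF cc(1)]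
      by (cases "q = p") (auto simp: Ppc_def)
    show "PH h ?c tm lg q (cH ?c q) (cL ?c q)"
    proof (cases "q = p")
      case True thus ?thesis using PH_cong[OF cc(1)] by (simp add: PH_def)
    next
      case False thus ?thesis using o(5)[of q] PH_cong[OF cc(1)] by simp
    qed
    show "Ploc \<delta> s0 h ?c tm lg (cL ?c q)"
    proof (cases "q = p")
      case False
      thus ?thesis using Ploc_weak[OF o(8)[of q] cc f N] by simp
    next
      case True thus ?thesis by (simp add: Ploc_def)
    qed
  qed
qed




lemma uline2: assumes I: "INV \<delta> s0 h c tm lg" and pc: "pcq c p = 2"
  shows "\<exists>tm'. INV \<delta> s0 h (updL (c\<lparr>cC := cC c + 1\<rparr>) p (\<lambda>l. l\<lparr>l_pc := 3, l_t := cC c\<rparr>)) tm' lg"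
proof -
  let ?c = "updL (c\<lparr>cC := cC c + 1\<rparr>) p (\<lambda>l. l\<lparr>l_pc := 3, l_t := cC c\<rparr>)"
  let ?l = "cL c p" let ?l' = "?l\<lparr>l_pc := 3, l_t := cC c\<rparr>"
  note o = INV_parts[OF I]
  obtain a where a: "pending h a" "h!a = Inv p (l_op ?l)" "\<And>t. valid c t \<Longrightarrow> tm t \<noteq> a"
    using o(2)[of p] pc by (auto simp: Ppc_def)
  define tm' where "tm' = tm(cC c := a)"
  have C1: "1 \<le> cC c" using o(1) by (simp add: I_time_def)
  have vnew: "\<And>t. valid ?c t \<longleftrightarrow> valid c t \<or> t = cC c" using C1 by (auto simp: valid_def)
  have tmeq: "\<And>t. valid c t \<Longrightarrow> tm' t = tm t" by (simp add: tm'_def valid_def)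
  have tpeq: "\<And>t. valid c t \<Longrightarrow> tproc h tm' t = tproc h tm t" "\<And>t. valid c t \<Longrightarrow> topo h tm' t = topo h tm t"
    using tmeq by (simp_all add: tproc_def topo_def)
  have tpnew: "tproc h tm' (cC c) = p" using a by (simp add: tm'_def tproc_def)
  have al: "a < length h" "is_inv (h!a)" using a unfolding pending_def by auto
  have f: "\<And>q t. fresh3 ?c q t \<Longrightarrow> fresh3 c q t \<or> (q = p \<and> t = cC c)"
    by (auto simp: fresh3_def split: if_splits)
  have vlt: "\<And>t. valid c t \<Longrightarrow> t \<noteq> cC c" by (simp add: valid_def)
  have vA: "\<And>tr. validA h c tm tr \<Longrightarrow> validA h ?c tm' tr"
  proof -
    fix tr assume A: "validA h c tm tr"
    show "validA h ?c tm' tr"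
    proof (cases "tr = (0, NOOP, HNoop)")
      case False
      hence v: "valid c (fst tr)" "fst (snd tr) = Op (topo h tm (fst tr))"
        "snd (snd tr) = HP (tproc h tm (fst tr))" "\<not> fresh3 c (tproc h tm (fst tr)) (fst tr)"
        using A by (auto simp: validA_def)
      thus ?thesis using vnew tpeq vlt[OF v(1)] f unfolding validA_def by metis
    qed (simp add: validA_def)
  qed
  have Inv': "INV \<delta> s0 h ?c tm' lg" unfolding INV_def
  proof (intro conjI allI)
    show "I_time h ?c tm'" unfolding I_time_def
    proof (intro conjI)
      show "1 \<le> cC ?c" by simp
      show "\<forall>t. valid ?c t \<longrightarrow> tm' t < length h \<and> is_inv (h ! tm' t)"
        using o(1) vnew al tmeq by (auto simp: I_time_def tm'_def)
      have "{t. valid ?c t} = insert (cC c) {t. valid c t}" using vnew by auto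
      moreover have "inj_on tm' {t. valid c t}" using o(1) tmeq unfolding I_time_def inj_on_def by auto
      moreover have "tm' (cC c) \<notin> tm' ` ({t. valid c t} - {cC c})" using a(3) tmeq by (auto simp: tm'_def)
      ultimately show "inj_on tm' {t. valid ?c t}" by simp
    qed
    show "I_hist h tm' lg" using o(3) o(4) tmeq unfolding I_hist_def I_log_def by (metis (no_types, lifting))
    have L: "\<forall>e\<in>set lg. valid c (et e) \<and> eq e = tproc h tm (et e) \<and> \<not> fresh3 c (eq e) (et e) \<and> tm (et e) < en e \<and> en e \<le> length h"
      and L2: "distinct (map et lg)" "\<forall>i j. i \<le> j \<longrightarrow> j < length lg \<longrightarrow> en (lg!i) \<le> en (lg!j)"
      "\<forall>i<length lg. (stst s0 lg i, topo h tm (et (lg!i)), es (lg!i), er (lg!i)) \<in> \<delta>"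
      "cS c = stup s0 lg (length lg)" using o(4) unfolding I_log_def by blast+
    show "I_log \<delta> s0 h ?c tm' lg" unfolding I_log_def
    proof (intro conjI)
      show "\<forall>e\<in>set lg. valid ?c (et e) \<and> eq e = tproc h tm' (et e) \<and> \<not> fresh3 ?c (eq e) (et e) \<and> tm' (et e) < en e \<and> en e \<le> length h"
      proof
        fix e assume e: "e \<in> set lg"
        hence v: "valid c (et e)" "eq e = tproc h tm (et e)" "\<not> fresh3 c (eq e) (et e)" "tm (et e) < en e" "en e \<le> length h"
          using L by auto
        have "\<not> fresh3 ?c (eq e) (et e)" using f v(3) vlt[OF v(1)] by blast
        thus "valid ?c (et e) \<and> eq e = tproc h tm' (et e) \<and> \<not> fresh3 ?c (eq e) (et e) \<and> tm' (et e) < en e \<and> en e \<le> length h"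
          using v vnew tpeq tmeq by simp
      qed
      show "\<forall>i<length lg. (stst s0 lg i, topo h tm' (et (lg!i)), es (lg!i), er (lg!i)) \<in> \<delta>"
        using L L2(3) tpeq by (metis nth_mem)
    qed (use L2 in simp_all)
    show "W ?c lg" using o(6) by (simp add: W_def)
    show "validA h ?c tm' (cA ?c)" using vA o(7) by simp
    fix q
    show "Ppc h ?c tm' q (cL ?c q)"
    proof (cases "q = p")
      case True
      thus ?thesis using o(2)[of p] pc a vnew by (auto simp: Ppc_def tm'_def)
    next
      case False
      let ?x = "cL c q"
      have old: "Ppc h c tm q ?x" using o(2)[of q] .
      have part4: "l_pc ?x \<noteq> 0 \<longrightarrow> (\<exists>b. pending h b \<and> h!b = Inv q (l_op ?x)
          \<and> (l_pc ?x = 2 \<longrightarrow> (\<forall>t. valid ?c t \<longrightarrow> tm' t \<noteq> b))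
          \<and> (3 \<le> l_pc ?x \<longrightarrow> valid ?c (l_t ?x) \<and> tm' (l_t ?x) = b))"
      proof
        assume nz: "l_pc ?x \<noteq> 0"
        then obtain b where b: "pending h b" "h!b = Inv q (l_op ?x)"
          "l_pc ?x = 2 \<longrightarrow> (\<forall>t. valid c t \<longrightarrow> tm t \<noteq> b)"
          "3 \<le> l_pc ?x \<longrightarrow> valid c (l_t ?x) \<and> tm (l_t ?x) = b"
          using old unfolding Ppc_def by blast
        have ab: "a \<noteq> b" using a(2) b(2) False by auto
        have "l_pc ?x = 2 \<longrightarrow> (\<forall>t. valid ?c t \<longrightarrow> tm' t \<noteq> b)"
        proof (intro impI allI)
          fix t assume "l_pc ?x = 2" "valid ?c t"
          thus "tm' t \<noteq> b" using vnew[of t] b(3) tmeq[of t] ab by (cases "t = cC c") (auto simp: tm'_def)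
        qed
        moreover have "3 \<le> l_pc ?x \<longrightarrow> valid ?c (l_t ?x) \<and> tm' (l_t ?x) = b"
          using b(4) vnew tmeq by blast
        ultimately show "\<exists>b. pending h b \<and> h!b = Inv q (l_op ?x)
          \<and> (l_pc ?x = 2 \<longrightarrow> (\<forall>t. valid ?c t \<longrightarrow> tm' t \<noteq> b))
          \<and> (3 \<le> l_pc ?x \<longrightarrow> valid ?c (l_t ?x) \<and> tm' (l_t ?x) = b)" using b by blast
      qed
      have "Ppc h ?c tm' q ?x" using old part4 unfolding Ppc_def by blast
      thus ?thesis using False by simp
    qed
    show "PH h ?c tm' lg q (cH ?c q) (cL ?c q)"
      unfolding PH_def
    proof (intro conjI)
      show "\<forall>t. cH ?c q = (t, Null) \<longrightarrow> valid ?c t \<longrightarrow> tproc h tm' t = q \<longrightarrow>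
          3 \<le> l_pc (cL ?c q) \<and> l_pc (cL ?c q) \<le> 13 \<and> l_t (cL ?c q) = t"
      proof (intro allI impI)
        fix t assume t: "cH ?c q = (t, Null)" "valid ?c t" "tproc h tm' t = q"
        show "3 \<le> l_pc (cL ?c q) \<and> l_pc (cL ?c q) \<le> 13 \<and> l_t (cL ?c q) = t"
        proof (cases "t = cC c")
          case True
          thus ?thesis using t tpnew by simp
        next
          case False
          hence v: "valid c t" using t vnew by simp
          hence "3 \<le> pcq c q \<and> pcq c q \<le> 13 \<and> ltq c q = t" using o(5)[of q] t tpeq by (auto simp: PH_def)
          moreover hence "q \<noteq> p" using pc by auto
          ultimately show ?thesis by simp
        qed
      qed
      show "4 \<le> l_pc (cL ?c q) \<longrightarrow> cH ?c q = (l_t (cL ?c q), Null) \<or> (\<exists>e\<in>set lg. et e = l_t (cL ?c q) \<and> cH ?c q = (l_t (cL ?c q), Resp (er e)))"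
      proof
        assume "4 \<le> l_pc (cL ?c q)"
        moreover hence "q \<noteq> p" by auto
        ultimately show "cH ?c q = (l_t (cL ?c q), Null) \<or> (\<exists>e\<in>set lg. et e = l_t (cL ?c q) \<and> cH ?c q = (l_t (cL ?c q), Resp (er e)))"
          using o(5)[of q] by (simp add: PH_def)
      qed
      show "l_pc (cL ?c q) = 14 \<longrightarrow> cH ?c q \<noteq> (l_t (cL ?c q), Null)"
      proof
        assume "l_pc (cL ?c q) = 14"
        moreover hence "q \<noteq> p" by auto
        ultimately show "cH ?c q \<noteq> (l_t (cL ?c q), Null)" using o(5)[of q] by (simp add: PH_def)
      qed
    qed
    show "Ploc \<delta> s0 h ?c tm' lg (cL ?c q)"
    proof (cases "q = p")
      case True thus ?thesis by (simp add: Ploc_def)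
    next
      case False
      let ?x = "cL c q"
      have P: "Ploc \<delta> s0 h c tm lg ?x" using o(8) .
      have "validA h c tm (a1 ?x) \<Longrightarrow> validA h ?c tm' (a1 ?x)" using vA .
      moreover have "l_pc ?x = 12 \<Longrightarrow> topo h tm' (l_t1 ?x) = topo h tm (l_t1 ?x)"
      proof -
        assume "l_pc ?x = 12"
        hence "validA h c tm (a1 ?x)" "1 \<le> l_t1 ?x" using P by (auto simp: Ploc_def)
        hence "valid c (l_t1 ?x)" by (auto simp: validA_def a1_def)
        thus ?thesis using tpeq by simp
      qed
      ultimately show ?thesis using P False unfolding Ploc_def by simp
    qed
  qed
  thus ?thesis by blast
qed



lemma stup_app: "k \<le> length lg \<Longrightarrow> stup s0 (lg @ [E]) k = stup s0 lg k"
  by (auto simp: stup_def nth_append)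

lemma stst_app: "k \<le> length lg \<Longrightarrow> stst s0 (lg @ [E]) k = stst s0 lg k"
  by (auto simp: stst_def nth_append)

lemma stup_time: "k \<le> length lg \<Longrightarrow> fst (stup s0 lg k) = 0 \<or> fst (stup s0 lg k) \<in> et ` set lg"
  by (auto simp: stup_def)

lemma PH_mono_lg: "PH h c tm lg q hq l \<Longrightarrow> set lg \<subseteq> set lg' \<Longrightarrow> PH h c tm lg' q hq l"
  unfolding PH_def by blast

lemma uline12: assumes I: "INV \<delta> s0 h c tm lg" and pc: "pcq c p = 12"
  shows "\<exists>lg'. INV \<delta> s0 h (updL (c\<lparr>cS := (if cS c = (l_ts (cL c p), l_ss (cL c p), l_rs (cL c p), l_ps (cL c p))
                         then (l_t1 (cL c p), l_s1 (cL c p), l_r1 (cL c p), l_p1 (cL c p)) else cS c)\<rparr>) p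
          (\<lambda>l. l\<lparr>l_pc := 4\<rparr>)) tm lg'" (is "\<exists>lg'. INV _ _ _ ?c _ lg'")
proof -
  let ?l = "cL c p" let ?l' = "?l\<lparr>l_pc := 4\<rparr>"
  note o = INV_parts[OF I]
  have f: "fresh3 ?c = fresh3 c" by (rule fresh3_upd[where p = p and l' = ?l']) (use pc in auto)
  have cc: "cC ?c = cC c" "cH ?c = cH c" by simp_all
  show ?thesis
  proof (cases "cS c = rd ?l")
    case False
    hence S: "cS ?c = cS c" by (simp add: rd_def)
    have "INV \<delta> s0 h ?c tm lg"
    proof (rule local_step[OF I, where l' = ?l' and p = p])
      show "fresh3 ?c = fresh3 c" by (rule f)
      show "Ppc h c tm p ?l'" using o(2)[of p] pc by (auto simp: Ppc_def)
      show "PH h c tm lg p (cH c p) ?l'" using o(5)[of p] pc by (auto simp: PH_def)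
      show "Ploc \<delta> s0 h c tm lg ?l'" by (simp add: Ploc_def)
    qed (use False in \<open>simp_all add: o(7) f rd_def\<close>)
    thus ?thesis by blast
  next
    case True
    have P: "Ploc \<delta> s0 h c tm lg ?l" using o(8) .
    let ?t = "l_t1 ?l"
    have vA: "validA h c tm (a1 ?l)" and t1: "1 \<le> ?t" and nl: "?t \<notin> et ` set lg"
      and X6: "lg \<noteq> [] \<Longrightarrow> cH c (eq (last lg)) \<noteq> (et (last lg), Null)"
      using P pc True by (auto simp: Ploc_def)
    obtain r where r: "l_r1 ?l = Resp r" "(l_ss ?l, topo h tm ?t, l_s1 ?l, r) \<in> \<delta>"
      using P pc by (auto simp: Ploc_def)
    have v: "valid c ?t" "l_p1 ?l = HP (tproc h tm ?t)" "\<not> fresh3 c (tproc h tm ?t) ?t"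
      using vA t1 by (auto simp: validA_def a1_def)
    define E where "E = (?t, tproc h tm ?t, length h, r, l_s1 ?l)"
    define lg' where "lg' = lg @ [E]"
    have S': "cS ?c = stup s0 lg' (length lg')" using True r v
      by (simp add: rd_def lg'_def E_def stup_def)
    have Sold: "cS c = stup s0 lg (length lg)" using o(4) by (simp add: I_log_def)
    have setlg: "set lg \<subseteq> set lg'" by (auto simp: lg'_def)
    have tmlt: "tm ?t < length h" using o(1) v(1) by (simp add: I_time_def)
    have rdne: "\<And>k. k \<le> length lg \<Longrightarrow> stup s0 lg k \<noteq> cS ?c"
    proof
      fix k assume k: "k \<le> length lg" "stup s0 lg k = cS ?c"
      hence "fst (stup s0 lg k) = ?t" using True by (simp add: rd_def)
      thus False using stup_time[OF k(1), of s0] t1 nl by auto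
    qed
    have "INV \<delta> s0 h ?c tm lg'" unfolding INV_def
    proof (intro conjI allI)
      show "I_time h ?c tm" using o(1) I_time_cong[OF cc(1)] by simp
      show "I_hist h tm lg'" using o(3) setlg unfolding I_hist_def by blast
      have L: "\<forall>e\<in>set lg. valid c (et e) \<and> eq e = tproc h tm (et e) \<and> \<not> fresh3 c (eq e) (et e) \<and> tm (et e) < en e \<and> en e \<le> length h"
        and L2: "distinct (map et lg)" "\<forall>i j. i \<le> j \<longrightarrow> j < length lg \<longrightarrow> en (lg!i) \<le> en (lg!j)"
        "\<forall>i<length lg. (stst s0 lg i, topo h tm (et (lg!i)), es (lg!i), er (lg!i)) \<in> \<delta>"
        using o(4) unfolding I_log_def by blast+
      show "I_log \<delta> s0 h ?c tm lg'" unfolding I_log_def valid_cong[OF cc(1)] f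
      proof (intro conjI)
        show "\<forall>e\<in>set lg'. valid c (et e) \<and> eq e = tproc h tm (et e) \<and> \<not> fresh3 c (eq e) (et e) \<and> tm (et e) < en e \<and> en e \<le> length h"
          using L v tmlt by (auto simp: lg'_def E_def)
        show "distinct (map et lg')" using L2(1) nl by (simp add: lg'_def E_def)
        show "\<forall>i j. i \<le> j \<longrightarrow> j < length lg' \<longrightarrow> en (lg'!i) \<le> en (lg'!j)"
        proof (intro allI impI)
          fix i j assume ij: "i \<le> j" "j < length lg'"
          show "en (lg'!i) \<le> en (lg'!j)"
          proof (cases "j < length lg")
            case True thus ?thesis using L2(2) ij by (simp add: lg'_def nth_append)
          next
            case False
            hence "j = length lg" using ij by (simp add: lg'_def)
            moreover have "i < length lg \<Longrightarrow> en (lg!i) \<le> length h" using L nth_mem by blast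
            ultimately show ?thesis using ij by (auto simp: lg'_def nth_append E_def)
          qed
        qed
        show "\<forall>i<length lg'. (stst s0 lg' i, topo h tm (et (lg'!i)), es (lg'!i), er (lg'!i)) \<in> \<delta>"
        proof (intro allI impI)
          fix i assume i: "i < length lg'"
          show "(stst s0 lg' i, topo h tm (et (lg'!i)), es (lg'!i), er (lg'!i)) \<in> \<delta>"
          proof (cases "i < length lg")
            case True thus ?thesis using L2(3) stst_app[of i lg s0 E] by (simp add: lg'_def nth_append)
          next
            case False
            hence ii: "i = length lg" using i by (simp add: lg'_def)
            have "stst s0 lg' i = stst s0 lg (length lg)" using ii stst_app[of "length lg" lg s0 E] by (simp add: lg'_def)
            also have "\<dots> = fst (snd (stup s0 lg (length lg)))" using stup_len[of "length lg" lg s0] by simp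
            also have "\<dots> = l_ss ?l" using Sold True by (metis rd_def fst_conv snd_conv)
            finally show ?thesis using r ii by (simp add: lg'_def E_def nth_append)
          qed
        qed
        show "cS ?c = stup s0 lg' (length lg')" by (rule S')
      qed
      show "W ?c lg'" unfolding W_def
      proof (intro allI impI)
        fix j assume j: "Suc j < length lg'"
        show "cH ?c (eq (lg'!j)) \<noteq> (et (lg'!j), Null)"
        proof (cases "Suc j < length lg")
          case True thus ?thesis using o(6) by (simp add: W_def lg'_def nth_append)
        next
          case False
          hence jj: "j = length lg - 1" "lg \<noteq> []" using j by (auto simp: lg'_def)
          hence "lg'!j = last lg" by (simp add: lg'_def nth_append last_conv_nth)
          thus ?thesis using X6 jj by simp
        qed
      qed
      show "validA h ?c tm (cA ?c)" using o(7) validA_cong[OF cc(1) f] by simp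
      fix q
      show "Ppc h ?c tm q (cL ?c q)" using o(2)[of q] pc Ppc_cong[OF cc(1)]
        by (cases "q = p") (auto simp: Ppc_def)
      have "PH h c tm lg q (cH c q) (cL ?c q)" using o(5)[of q] pc by (cases "q = p") (auto simp: PH_def)
      hence "PH h c tm lg' q (cH c q) (cL ?c q)" using PH_mono_lg[OF _ setlg] by blast
      thus "PH h ?c tm lg' q (cH ?c q) (cL ?c q)" using PH_cong[OF cc(1)] by simp
      show "Ploc \<delta> s0 h ?c tm lg' (cL ?c q)"
      proof (cases "q = p")
        case True thus ?thesis by (simp add: Ploc_def)
      next
        case False
        let ?x = "cL c q"
        have Px: "Ploc \<delta> s0 h c tm lg ?x" using o(8) .
        have R: "6 \<le> l_pc ?x \<Longrightarrow> l_pc ?x \<le> 13 \<Longrightarrow> \<exists>k\<le>length lg. rd ?x = stup s0 lg k"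
          using Px by (simp add: Ploc_def)
        have R': "6 \<le> l_pc ?x \<Longrightarrow> l_pc ?x \<le> 13 \<Longrightarrow> \<exists>k\<le>length lg'. rd ?x = stup s0 lg' k"
          using R stup_app by (metis lg'_def le_SucI length_append_singleton)
        have ne: "6 \<le> l_pc ?x \<Longrightarrow> l_pc ?x \<le> 13 \<Longrightarrow> rd ?x \<noteq> cS ?c" using R rdne by metis
        have "validA h ?c tm (a1 ?x) = validA h c tm (a1 ?x)" using validA_cong[OF cc(1) f] by simp
        hence "Ploc \<delta> s0 h ?c tm lg' ?x" using Px R' ne unfolding Ploc_def by auto
        thus ?thesis using False by simp
      qed
    qed
    thus ?thesis by blast
  qed
qed



lemma tproc_snoc: "tm t < length h \<Longrightarrow> tproc (h@[e]) tm t = tproc h tm t"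
  by (simp add: tproc_def nth_append)
lemma topo_snoc: "tm t < length h \<Longrightarrow> topo (h@[e]) tm t = topo h tm t"
  by (simp add: topo_def nth_append)

lemma validA_snoc: assumes T: "I_time h c tm" and A: "validA h c tm tr" shows "validA (h@[e]) c tm tr"
proof (cases "tr = (0, NOOP, HNoop)")
  case False
  hence v: "valid c (fst tr)" using A by (auto simp: validA_def)
  hence "tm (fst tr) < length h" using T by (simp add: I_time_def)
  thus ?thesis using A by (simp add: validA_def tproc_snoc topo_snoc)
qed (simp add: validA_def)

lemma I_time_snoc: "I_time h c tm \<Longrightarrow> I_time (h@[e]) c tm"
  unfolding I_time_def by (auto simp: nth_append)

lemma I_log_snoc: assumes T: "I_time h c tm" and L: "I_log \<delta> s0 h c tm lg" shows "I_log \<delta> s0 (h@[e]) c tm lg"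
proof -
  have v: "\<And>E. E \<in> set lg \<Longrightarrow> tm (et E) < length h" using T L by (auto simp: I_time_def I_log_def)
  show ?thesis using L unfolding I_log_def
    using v tproc_snoc topo_snoc nth_mem by (smt (verit, ccfv_threshold) le_SucI length_append_singleton)
qed

lemma PH_snoc: assumes T: "I_time h c tm" and P: "PH h c tm lg q hq l" shows "PH (h@[e]) c tm lg q hq l"
  using P T unfolding PH_def I_time_def by (auto simp: tproc_snoc)

lemma Ploc_snoc: assumes T: "I_time h c tm" and P: "Ploc \<delta> s0 h c tm lg l" shows "Ploc \<delta> s0 (h@[e]) c tm lg l"
proof -
  have "l_pc l = 12 \<Longrightarrow> topo (h@[e]) tm (l_t1 l) = topo h tm (l_t1 l)"
  proof -
    assume "l_pc l = 12"
    hence "validA h c tm (a1 l)" "1 \<le> l_t1 l" using P by (auto simp: Ploc_def)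
    hence "valid c (l_t1 l)" by (auto simp: validA_def a1_def)
    hence "tm (l_t1 l) < length h" using T by (simp add: I_time_def)
    thus ?thesis by (rule topo_snoc)
  qed
  moreover have "validA h c tm (a1 l) \<Longrightarrow> validA (h@[e]) c tm (a1 l)" using validA_snoc[OF T] .
  ultimately show ?thesis using P unfolding Ploc_def by auto
qed

lemma Ppc_snoc_other: assumes P: "Ppc h c tm q l" and e: "ev_proc e \<noteq> q"
  shows "Ppc (h@[e]) c tm q l"
proof -
  have pr: "proj q (h@[e]) = proj q h" using e by (simp add: proj_single)
  have c3: "\<forall>a. l_pc l = 0 \<longrightarrow> pending (h@[e]) a \<longrightarrow> ev_proc ((h@[e])!a) \<noteq> q"
  proof (intro allI impI)
    fix a assume z: "l_pc l = 0" and pa: "pending (h@[e]) a"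
    show "ev_proc ((h@[e])!a) \<noteq> q"
    proof (cases "a = length h")
      case True thus ?thesis using e by simp
    next
      case False
      hence "pending h a" "a < length h" using pa unfolding pending_snoc by (auto simp: pending_def)
      thus ?thesis using P z by (auto simp: Ppc_def nth_append)
    qed
  qed
  have c4: "l_pc l \<noteq> 0 \<longrightarrow> (\<exists>a. pending (h@[e]) a \<and> (h@[e])!a = Inv q (l_op l)
          \<and> (l_pc l = 2 \<longrightarrow> (\<forall>t. valid c t \<longrightarrow> tm t \<noteq> a))
          \<and> (3 \<le> l_pc l \<longrightarrow> valid c (l_t l) \<and> tm (l_t l) = a))"
  proof
    assume nz: "l_pc l \<noteq> 0"
    then obtain a where a: "pending h a" "h!a = Inv q (l_op l)"
          "l_pc l = 2 \<longrightarrow> (\<forall>t. valid c t \<longrightarrow> tm t \<noteq> a)"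
          "3 \<le> l_pc l \<longrightarrow> valid c (l_t l) \<and> tm (l_t l) = a" using P unfolding Ppc_def by blast
    have al: "a < length h" using a(1) by (simp add: pending_def)
    have "pending (h@[e]) a" using a e unfolding pending_snoc by simp
    thus "\<exists>a. pending (h@[e]) a \<and> (h@[e])!a = Inv q (l_op l)
          \<and> (l_pc l = 2 \<longrightarrow> (\<forall>t. valid c t \<longrightarrow> tm t \<noteq> a))
          \<and> (3 \<le> l_pc l \<longrightarrow> valid c (l_t l) \<and> tm (l_t l) = a)" using a al by (auto simp: nth_append)
  qed
  show ?thesis using P c3 c4 unfolding Ppc_def pr by blast
qed

lemma uline1: assumes I: "INV \<delta> s0 h c tm lg" and pc: "pcq c p = 0"
  shows "INV \<delta> s0 (h @ [Inv p oo]) (updL c p (\<lambda>l. l\<lparr>l_pc := 2, l_op := oo\<rparr>)) tm lg" (is "INV _ _ ?h ?c _ _")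
proof -
  let ?l = "cL c p" let ?l' = "?l\<lparr>l_pc := 2, l_op := oo\<rparr>"
  note o = INV_parts[OF I]
  have f: "fresh3 ?c = fresh3 c" by (rule fresh3_upd[where p = p and l' = ?l']) (use pc in auto)
  have cc: "cC ?c = cC c" "cH ?c = cH c" "cS ?c = cS c" by simp_all
  have ev: "even (length (proj p h))" and nop: "\<And>a. pending h a \<Longrightarrow> ev_proc (h!a) \<noteq> p"
    using o(2)[of p] pc by (auto simp: Ppc_def)
  show ?thesis unfolding INV_def
  proof (intro conjI allI)
    show "I_time ?h ?c tm" using I_time_snoc[OF o(1)] I_time_cong[OF cc(1)] by simp
    show "I_hist ?h tm lg" unfolding I_hist_def
    proof (intro conjI)
      show "wf_hist ?h" using o(3) ev by (simp add: I_hist_def wf_hist_snoc)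
      show "\<forall>a<length ?h. is_inv (?h!a) \<longrightarrow> pending ?h a \<or> (\<exists>b. matching ?h a b)"
      proof (intro allI impI)
        fix a assume a: "a < length ?h" "is_inv (?h!a)"
        show "pending ?h a \<or> (\<exists>b. matching ?h a b)"
        proof (cases "a = length h")
          case True thus ?thesis by (simp add: pending_snoc)
        next
          case False
          hence al: "a < length h" using a by simp
          hence "pending h a \<or> (\<exists>b. matching h a b)" using o(3) a by (auto simp: I_hist_def nth_append)
          thus ?thesis using nop[of a] al by (auto simp: pending_snoc matching_snoc)
        qed
      qed
      show "\<forall>a b. matching ?h a b \<longrightarrow> (\<exists>e\<in>set lg. tm (et e) = a \<and> en e \<le> b \<and> res_val (?h!b) = Resp (er e))"
      proof (intro allI impI)
        fix a b assume "matching ?h a b"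
        hence m: "matching h a b" by (simp add: matching_snoc)
        hence "b < length h" by (simp add: matching_def)
        thus "\<exists>e\<in>set lg. tm (et e) = a \<and> en e \<le> b \<and> res_val (?h!b) = Resp (er e)"
          using o(3) m by (auto simp: I_hist_def nth_append)
      qed
    qed
    show "I_log \<delta> s0 ?h ?c tm lg" using I_log_snoc[OF o(1) o(4)] I_log_cong[OF cc(1) f cc(3)] by simp
    show "W ?c lg" using o(6) W_cong[OF cc(2)] by simp
    show "validA ?h ?c tm (cA ?c)" using validA_snoc[OF o(1) o(7)] validA_cong[OF cc(1) f] by simp
    fix q
    show "Ppc ?h ?c tm q (cL ?c q)"
    proof (cases "q = p")
      case False
      thus ?thesis using Ppc_snoc_other[OF o(2)[of q], of "Inv p oo"] Ppc_cong[OF cc(1)] by simp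
    next
      case True
      have "\<forall>t. valid c t \<longrightarrow> tm t \<noteq> length h" using o(1) by (auto simp: I_time_def)
      moreover have "pending ?h (length h)" by (simp add: pending_snoc)
      ultimately have "Ppc ?h c tm p ?l'" using ev unfolding Ppc_def by (auto simp: proj_single)
      thus ?thesis using True Ppc_cong[OF cc(1)] by simp
    qed
    show "PH ?h ?c tm lg q (cH ?c q) (cL ?c q)"
    proof (cases "q = p")
      case False
      thus ?thesis using PH_snoc[OF o(1) o(5)[of q]] PH_cong[OF cc(1)] by simp
    next
      case True
      have "PH h c tm lg p (cH c p) ?l'" using o(5)[of p] pc by (auto simp: PH_def)
      thus ?thesis using PH_snoc[OF o(1)] True PH_cong[OF cc(1)] by simp
    qed
    show "Ploc \<delta> s0 ?h ?c tm lg (cL ?c q)"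
    proof (cases "q = p")
      case False
      thus ?thesis using Ploc_snoc[OF o(1) o(8)[of q]] Ploc_cong[OF cc(1) f cc(3) cc(2)] by simp
    qed (simp add: Ploc_def)
  qed
qed

lemma uline14: assumes I: "INV \<delta> s0 h c tm lg" and pc: "pcq c p = 14"
  shows "INV \<delta> s0 (h @ [Res p (snd (cH c p))]) (updL c p (\<lambda>l. l\<lparr>l_pc := 0\<rparr>)) tm lg" (is "INV _ _ ?h ?c _ _")
proof -
  let ?l = "cL c p" let ?l' = "?l\<lparr>l_pc := 0\<rparr>" let ?e = "Res p (snd (cH c p))"
  note o = INV_parts[OF I]
  have f: "fresh3 ?c = fresh3 c" by (rule fresh3_upd[where p = p and l' = ?l']) (use pc in auto)
  have cc: "cC ?c = cC c" "cH ?c = cH c" "cS ?c = cS c" by simp_all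
  have odd: "odd (length (proj p h))" using o(2)[of p] pc by (auto simp: Ppc_def)
  obtain ap where ap: "pending h ap" "h!ap = Inv p (l_op ?l)" "tm (ltq c p) = ap"
    using o(2)[of p] pc by (auto simp: Ppc_def)
  obtain E where E: "E \<in> set lg" "et E = ltq c p" "cH c p = (ltq c p, Resp (er E))"
    using o(5)[of p] pc by (auto simp: PH_def)
  have apl: "ap < length h" using ap(1) by (simp add: pending_def)
  have enE: "en E \<le> length h" using o(4) E(1) by (simp add: I_log_def)
  show ?thesis unfolding INV_def
  proof (intro conjI allI)
    show "I_time ?h ?c tm" using I_time_snoc[OF o(1)] I_time_cong[OF cc(1)] by simp
    show "I_hist ?h tm lg" unfolding I_hist_def
    proof (intro conjI)
      show "wf_hist ?h" using o(3) odd by (simp add: I_hist_def wf_hist_snoc)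
      show "\<forall>a<length ?h. is_inv (?h!a) \<longrightarrow> pending ?h a \<or> (\<exists>b. matching ?h a b)"
      proof (intro allI impI)
        fix a assume a: "a < length ?h" "is_inv (?h!a)"
        have al: "a < length h" using a by (cases "a = length h") auto
        hence "pending h a \<or> (\<exists>b. matching h a b)" using o(3) a by (auto simp: I_hist_def nth_append)
        moreover have "pending h a \<Longrightarrow> ev_proc (h!a) = p \<Longrightarrow> matching ?h a (length h)"
          using ap pending_unique by (simp add: matching_snoc)
        ultimately show "pending ?h a \<or> (\<exists>b. matching ?h a b)" by (auto simp: pending_snoc matching_snoc)
      qed
      show "\<forall>a b. matching ?h a b \<longrightarrow> (\<exists>e\<in>set lg. tm (et e) = a \<and> en e \<le> b \<and> res_val (?h!b) = Resp (er e))"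
      proof (intro allI impI)
        fix a b assume m: "matching ?h a b"
        show "\<exists>e\<in>set lg. tm (et e) = a \<and> en e \<le> b \<and> res_val (?h!b) = Resp (er e)"
        proof (cases "matching h a b")
          case True
          hence "b < length h" by (simp add: matching_def)
          thus ?thesis using o(3) True by (auto simp: I_hist_def nth_append)
        next
          case False
          hence b: "b = length h" "pending h a" "ev_proc (h!a) = p" using m by (auto simp: matching_snoc)
          hence "a = ap" using pending_unique ap by (metis ev_proc.simps(1))
          thus ?thesis using E ap b enE by (intro bexI[OF _ E(1)]) (simp add: res_val_def)
        qed
      qed
    qed
    show "I_log \<delta> s0 ?h ?c tm lg" using I_log_snoc[OF o(1) o(4)] I_log_cong[OF cc(1) f cc(3)] by simp
    show "W ?c lg" using o(6) W_cong[OF cc(2)] by simp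
    show "validA ?h ?c tm (cA ?c)" using validA_snoc[OF o(1) o(7)] validA_cong[OF cc(1) f] by simp
    fix q
    show "Ppc ?h ?c tm q (cL ?c q)"
    proof (cases "q = p")
      case False
      thus ?thesis using Ppc_snoc_other[OF o(2)[of q], of ?e] Ppc_cong[OF cc(1)] by simp
    next
      case True
      have "\<forall>a. pending ?h a \<longrightarrow> ev_proc (?h!a) \<noteq> p"
        by (auto simp: pending_snoc nth_append pending_def)
      hence "Ppc ?h c tm p ?l'" using odd unfolding Ppc_def by (auto simp: proj_single)
      thus ?thesis using True Ppc_cong[OF cc(1)] by simp
    qed
    show "PH ?h ?c tm lg q (cH ?c q) (cL ?c q)"
    proof (cases "q = p")
      case False
      thus ?thesis using PH_snoc[OF o(1) o(5)[of q]] PH_cong[OF cc(1)] by simp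
    next
      case True
      have "PH h c tm lg p (cH c p) ?l'" using E by (auto simp: PH_def)
      thus ?thesis using PH_snoc[OF o(1)] True PH_cong[OF cc(1)] by simp
    qed
    show "Ploc \<delta> s0 ?h ?c tm lg (cL ?c q)"
    proof (cases "q = p")
      case False
      thus ?thesis using Ploc_snoc[OF o(1) o(8)[of q]] Ploc_cong[OF cc(1) f cc(3) cc(2)] by simp
    qed (simp add: Ploc_def)
  qed
qed



lemma step: assumes I: "INV \<delta> s0 h c tm lg" and st: "ustep \<delta> c p e c'"
  shows "\<exists>tm' lg'. INV \<delta> s0 (h @ (case e of None \<Rightarrow> [] | Some x \<Rightarrow> [x])) c' tm' lg'"
  using st
proof (cases rule: ustep.cases)
  case (line1 oo)
  hence "INV \<delta> s0 (h @ (case e of None \<Rightarrow> [] | Some x \<Rightarrow> [x])) c' tm lg" using uline1[OF I] by (simp only: a1_def option.simps append_Nil2; metis (no_types))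
  thus ?thesis by blast
next
  case line2
  thus ?thesis using uline2[OF I] by (metis (no_types) a1_def append_Nil2 option.simps(4))
next
  case line3
  hence "INV \<delta> s0 (h @ (case e of None \<Rightarrow> [] | Some x \<Rightarrow> [x])) c' tm lg" using uline3[OF I] by (simp only: a1_def option.simps append_Nil2; metis (no_types))
  thus ?thesis by blast
next
  case line4
  hence "INV \<delta> s0 (h @ (case e of None \<Rightarrow> [] | Some x \<Rightarrow> [x])) c' tm lg" using uline4[OF I] by (simp only: a1_def option.simps append_Nil2; metis (no_types))
  thus ?thesis by blast
next
  case (line5 t s r x)
  hence "INV \<delta> s0 (h @ (case e of None \<Rightarrow> [] | Some x \<Rightarrow> [x])) c' tm lg" using uline5[OF I] by (simp only: a1_def option.simps append_Nil2; metis (no_types))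
  thus ?thesis by blast
next
  case (line6 l)
  hence "INV \<delta> s0 (h @ (case e of None \<Rightarrow> [] | Some x \<Rightarrow> [x])) c' tm lg" using uline6[OF I] by (simp only: a1_def option.simps append_Nil2; metis (no_types))
  thus ?thesis by blast
next
  case (line7 l)
  hence "INV \<delta> s0 (h @ (case e of None \<Rightarrow> [] | Some x \<Rightarrow> [x])) c' tm lg" using uline7[OF I] by (simp only: a1_def option.simps append_Nil2; metis (no_types))
  thus ?thesis by blast
next
  case (line8 t oo x)
  hence "INV \<delta> s0 (h @ (case e of None \<Rightarrow> [] | Some x \<Rightarrow> [x])) c' tm lg" using uline8[OF I] by (simp only: a1_def option.simps append_Nil2; metis (no_types))
  thus ?thesis by blast
next
  case line9_10
  hence "INV \<delta> s0 (h @ (case e of None \<Rightarrow> [] | Some x \<Rightarrow> [x])) c' tm lg" using uline9[OF I] by (simp only: a1_def option.simps append_Nil2; metis (no_types))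
  thus ?thesis by blast
next
  case (line11 oo s' r')
  hence "INV \<delta> s0 (h @ (case e of None \<Rightarrow> [] | Some x \<Rightarrow> [x])) c' tm lg" using uline11[OF I] by (simp only: a1_def option.simps append_Nil2; metis (no_types))
  thus ?thesis by blast
next
  case (line12 l)
  thus ?thesis using uline12[OF I] by (metis (no_types) a1_def append_Nil2 option.simps(4))
next
  case (line13 l)
  hence "INV \<delta> s0 (h @ (case e of None \<Rightarrow> [] | Some x \<Rightarrow> [x])) c' tm lg" using uline13[OF I] by (simp only: a1_def option.simps append_Nil2; metis (no_types))
  thus ?thesis by blast
next
  case line14
  hence "INV \<delta> s0 (h @ (case e of None \<Rightarrow> [] | Some x \<Rightarrow> [x])) c' tm lg" using uline14[OF I] by (simp only: a1_def option.simps append_Nil2; metis (no_types))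
  thus ?thesis by blast
qed

lemma history_snoc: "history (tr @ [e]) = history tr @ (case e of None \<Rightarrow> [] | Some x \<Rightarrow> [x])"
  by (cases e) (simp_all add: history_def map_filter_def)

lemma exec_INV: "uexec \<delta> c0 tr c \<Longrightarrow> init_conf s0 c0 \<Longrightarrow> \<exists>tm lg. INV \<delta> s0 (history tr) c tm lg"
proof (induction rule: uexec.induct)
  case (nil c)
  thus ?case using init_INV[of s0 c] by (auto simp: history_def map_filter_def)
next
  case (snoc c0 tr c p e c')
  then obtain tm lg where "INV \<delta> s0 (history tr) c tm lg" by blast
  thus ?case using step[OF _ snoc.hyps(2)] history_snoc by metis
qed

lemma INV_result: assumes I: "INV \<delta> s0 h c tm lg"
  shows "\<exists>h' pt. is_completion h h' \<and> linearization h' pt \<and> conforms \<delta> s0 h' pt"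
proof -
  note o = INV_parts[OF I]
  have L: "\<forall>e\<in>set lg. valid c (et e) \<and> eq e = tproc h tm (et e) \<and> \<not> fresh3 c (eq e) (et e) \<and> tm (et e) < en e \<and> en e \<le> length h"
    and L2: "distinct (map et lg)" "\<forall>i j. i \<le> j \<longrightarrow> j < length lg \<longrightarrow> en (lg!i) \<le> en (lg!j)"
    "\<forall>i<length lg. (stst s0 lg i, topo h tm (et (lg!i)), es (lg!i), er (lg!i)) \<in> \<delta>"
    using o(4) unfolding I_log_def by blast+
  have T: "\<forall>t. valid c t \<longrightarrow> tm t < length h \<and> is_inv (h ! tm t)" "inj_on tm {t. valid c t}"
    using o(1) unfolding I_time_def by blast+
  have H: "wf_hist h" "\<forall>a<length h. is_inv (h!a) \<longrightarrow> pending h a \<or> (\<exists>b. matching h a b)"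
    "\<forall>a b. matching h a b \<longrightarrow> (\<exists>e\<in>set lg. tm (et e) = a \<and> en e \<le> b \<and> res_val (h!b) = Resp (er e))"
    using o(3) unfolding I_hist_def by blast+
  interpret loglin h "map (\<lambda>e. tm (et e)) lg" "map en lg" "map er lg" "s0 # map es lg" \<delta> s0
  proof
    show "wf_hist h" by (rule H(1))
    show "\<forall>p. (\<exists>a. pending h a \<and> ev_proc (h!a) = p) \<or> even (length (proj p h))"
    proof
      fix p
      show "(\<exists>a. pending h a \<and> ev_proc (h!a) = p) \<or> even (length (proj p h))"
      proof (cases "pcq c p = 0")
        case True thus ?thesis using o(2)[of p] by (simp add: Ppc_def)
      next
        case False
        then obtain a where "pending h a" "h!a = Inv p (l_op (cL c p))" using o(2)[of p] unfolding Ppc_def by blast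
        thus ?thesis by auto
      qed
    qed
    show "\<forall>a<length h. is_inv (h!a) \<longrightarrow> pending h a \<or> (\<exists>b. matching h a b)" by (rule H(2))
    show "length (map en lg) = length (map (\<lambda>e. tm (et e)) lg)" by simp
    show "length (map er lg) = length (map (\<lambda>e. tm (et e)) lg)" by simp
    show "length (s0 # map es lg) = Suc (length (map (\<lambda>e. tm (et e)) lg))" by simp
    have "map (\<lambda>e. tm (et e)) lg = map tm (map et lg)" by simp
    moreover have "inj_on tm (set (map et lg))" using T(2) L by (auto intro: inj_on_subset)
    hence "distinct (map tm (map et lg))" using L2(1) distinct_map by blast
    ultimately show "distinct (map (\<lambda>e. tm (et e)) lg)" by metis
    show "\<forall>i<length (map (\<lambda>e. tm (et e)) lg). map (\<lambda>e. tm (et e)) lg ! i < map en lg ! i \<and>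
        map en lg ! i \<le> length h \<and> is_inv (h ! (map (\<lambda>e. tm (et e)) lg ! i))"
      using L T(1) nth_mem by fastforce
    show "\<forall>i j. i \<le> j \<longrightarrow> j < length (map (\<lambda>e. tm (et e)) lg) \<longrightarrow> map en lg ! i \<le> map en lg ! j"
      using L2(2) by simp
    show "(s0 # map es lg) ! 0 = s0" by simp
    show "\<forall>i<length (map (\<lambda>e. tm (et e)) lg). ((s0 # map es lg) ! i, inv_op (h ! (map (\<lambda>e. tm (et e)) lg ! i)),
        (s0 # map es lg) ! Suc i, map er lg ! i) \<in> \<delta>"
    proof (intro allI impI)
      fix i assume i: "i < length (map (\<lambda>e. tm (et e)) lg)"
      have "(s0 # map es lg) ! i = stst s0 lg i" using i by (cases i) (simp_all add: stst_def)
      thus "((s0 # map es lg) ! i, inv_op (h ! (map (\<lambda>e. tm (et e)) lg ! i)),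
        (s0 # map es lg) ! Suc i, map er lg ! i) \<in> \<delta>" using L2(3) i by (simp add: topo_def)
    qed
    show "\<forall>a b. matching h a b \<longrightarrow> (\<exists>i<length (map (\<lambda>e. tm (et e)) lg). map (\<lambda>e. tm (et e)) lg ! i = a \<and>
        map en lg ! i \<le> b \<and> res_val (h ! b) = Resp (map er lg ! i))"
    proof (intro allI impI)
      fix a b assume "matching h a b"
      then obtain e where e: "e \<in> set lg" "tm (et e) = a" "en e \<le> b" "res_val (h!b) = Resp (er e)" using H(3) by blast
      then obtain i where "i < length lg" "lg!i = e" by (metis in_set_conv_nth)
      thus "\<exists>i<length (map (\<lambda>e. tm (et e)) lg). map (\<lambda>e. tm (et e)) lg ! i = a \<and>
        map en lg ! i \<le> b \<and> res_val (h ! b) = Resp (map er lg ! i)" using e by auto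
    qed
  qed
  show ?thesis by (rule result)
qed

theorem mainTheorem2:
  fixes \<delta> :: "('s \<times> 'o \<times> 's \<times> 'r) set" and s0 :: 's
    and c0 c :: "('p,'o,'r,'s) conf" and tr :: "('p,'o,'r) event option list"
  assumes "init_conf s0 c0"
    and "uexec \<delta> c0 tr c"
  shows "\<exists>h' pt. is_completion (history tr) h' \<and> linearization h' pt \<and> conforms \<delta> s0 h' pt"
proof -
  obtain tm lg where "INV \<delta> s0 (history tr) c tm lg" using exec_INV[OF assms(2) assms(1)] by blast
  thus ?thesis by (rule INV_result)
qed



end
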